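(* In a generalised differential Seely category, for all morphisms $f:X\to Y$ and $g:X\to Z$ of $\mathscr C$, $\mathrm D(\langle f,g\rangle)=\langle\mathrm D(f),\mathrm D(g)\rangle_X;\langle f,g\rangle^*\varphi^{-1}_{Y,Z}$, where $\langle\mathrm D(f),\mathrm D(g)\rangle_X:(X,\lambda(X))\to(X,\lambda(Y)\oplus\lambda(Z))$ is the pairing in the fibre $LS(\mathscr C)_X$.
   Context: Composition is diagrammatic; monoidal categories are strict. Setting: an LNL adjunction $\mathcal F\dashv\mathcal U$, $\mathcal F:\mathscr C\to\mathcal L$, between cartesian $(\mathscr C,\times,I)$ and symmetric monoidal $(\mathcal L,\otimes,1)$; $\mathcal U$ lax monoidal via $n_{A,B}$; $\mathcal F$ strong monoidal via isomorphisms $m_{X,Y}:\mathcal F(X)\otimes\mathcal F(Y)\to\mathcal F(X\times Y)$, $m_1$; unit $\eta$; $\mathbf c_X:=\mathcal F(\Delta_X);m_{X,X}^{-1}$, $\mathbf w_X:=\mathcal F(t_X);m_1^{-1}$. $LS(\mathscr C)$: objects $(X,A)$; morphisms $(f,u):(X,A)\to(Y,B)$ with $f:X\to Y$, $u:\mathcal F(X)\otimes A\to B$; composition $(f,u);(g,v)=(f;g,(\mathbf c_X\otimes\mathrm{id}_A);(\mathcal F(f)\otimes u);v)$; identity $(\mathrm{id}_X,\mathbf w_X\otimes\mathrm{id}_A)$; $\mathbf{ls}(f,u)=f$; fibre $LS(\mathscr C)_X$ = morphisms $(\mathrm{id}_X,u)$; reindexing along $h:X\to Y$: $h^*(Y,B)=(X,B)$,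 $h^*(\mathrm{id}_Y,v)=(\mathrm{id}_X,(\mathcal F(h)\otimes\mathrm{id}_B);v)$. When $\mathcal L$ has biproducts $\oplus$, each fibre has biproducts $(X,A)\oplus_X(X,B)=(X,A\oplus B)$ (pairing $\langle(\mathrm{id}_X,u),(\mathrm{id}_X,v)\rangle_X=(\mathrm{id}_X,\langle u,v\rangle)$, injections $\iota^X_i=(\mathrm{id}_X,\mathbf w_X\otimes\iota_i)$) and $LS(\mathscr C)$ has products $(X\times Y,A\oplus B)$ with projections $(\pi_i,\mathbf w_{X\times Y}\otimes\pi_i)$. GDSC: $\mathcal L$ additive (CMon-enriched, $\otimes$ bilinear) with finite products, and a functor $\mathcal T:\mathscr C\to LS(\mathscr C)$ with: (t.1) $\mathbf{ls}\circ\mathcal T=\mathrm{id}$, so $\mathcal T(X)=(X,\lambda(X))$, and $\varphi_{X,Y}:=\langle\mathcal T(\pi_1),\mathcal T(\pi_2)\rangle:\mathcal T(X\times Y)\to(X\times Y,\lambda(X)\oplus\lambda(Y))$ is an isomorphism (it is vertical); (t.2) $\mathcal T(\mathcal U(A))=(\mathcal U(A),A)$; (t.3) with $i^{X,Y}_2:=\iota^{X\times Y}_2;\varphi^{-1}_{X,Y}$, $⦃(f,u)⦄:=\langle\pi_1;f,(\eta_X\times\mathrm{id});n_{\mathcal F(X),A};\mathcal U(u)\rangle$, $W(f,u):=(⦃(f,u)⦄,(\mathcal F(\pi_1)\otimes\mathrm{id}_A);u)$: $W(f,u);i^{Y,\mathcal U(B)}_2=i^{X,\mathcal U(A)}_2;\mathcal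 T(⦃(f,u)⦄)$. Differential: for $f:X\to Y$ with $\mathcal T(f)=(f,u)$, $\mathrm D(f):=(\mathrm{id}_X,u):(X,\lambda(X))\to(X,\lambda(Y))$. *)

theory Defs
  imports Main
begin

section \<open>Categories (composition written diagrammatically: cmp f g = f;g)\<close>

definition is_category :: "'a set \<Rightarrow> ('a \<Rightarrow> 'a \<Rightarrow> 'f set) \<Rightarrow> ('f \<Rightarrow> 'f \<Rightarrow> 'f) \<Rightarrow> ('a \<Rightarrow> 'f) \<Rightarrow> bool" where
  "is_category Ob Hom cmp idn \<longleftrightarrow>
     (\<forall>X\<in>Ob. idn X \<in> Hom X X) \<and>
     (\<forall>X\<in>Ob. \<forall>Y\<in>Ob. \<forall>Z\<in>Ob. \<forall>f\<in>Hom X Y. \<forall>g\<in>Hom Y Z. cmp f g \<in> Hom X Z) \<and>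
     (\<forall>X\<in>Ob. \<forall>Y\<in>Ob. \<forall>f\<in>Hom X Y. cmp (idn X) f = f \<and> cmp f (idn Y) = f) \<and>
     (\<forall>W\<in>Ob. \<forall>X\<in>Ob. \<forall>Y\<in>Ob. \<forall>Z\<in>Ob. \<forall>f\<in>Hom W X. \<forall>g\<in>Hom X Y. \<forall>h\<in>Hom Y Z.
        cmp (cmp f g) h = cmp f (cmp g h))"

section \<open>The cartesian category C (chosen finite products)\<close>

record ('a, 'f) cartcat =
  cOb :: "'a set"
  cHom :: "'a \<Rightarrow> 'a \<Rightarrow> 'f set"
  ccmp :: "'f \<Rightarrow> 'f \<Rightarrow> 'f"
  cidn :: "'a \<Rightarrow> 'f"
  cprd :: "'a \<Rightarrow> 'a \<Rightarrow> 'a"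
  cp1 :: "'a \<Rightarrow> 'a \<Rightarrow> 'f"
  cp2 :: "'a \<Rightarrow> 'a \<Rightarrow> 'f"
  cpair :: "'f \<Rightarrow> 'f \<Rightarrow> 'f"
  ctrm :: 'a
  cbang :: "'a \<Rightarrow> 'f"

definition cartesian :: "('a, 'f) cartcat \<Rightarrow> bool" where
  "cartesian C \<longleftrightarrow>
     is_category (cOb C) (cHom C) (ccmp C) (cidn C) \<and>
     ctrm C \<in> cOb C \<and>
     (\<forall>X\<in>cOb C. cbang C X \<in> cHom C X (ctrm C) \<and> (\<forall>h\<in>cHom C X (ctrm C). h = cbang C X)) \<and>
     (\<forall>X\<in>cOb C. \<forall>Y\<in>cOb C.
        cprd C X Y \<in> cOb C \<and>
        cp1 C X Y \<in> cHom C (cprd C X Y) X \<and> cp2 C X Y \<in> cHom C (cprd C X Y) Y \<and>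
        (\<forall>W\<in>cOb C. \<forall>f\<in>cHom C W X. \<forall>g\<in>cHom C W Y.
           cpair C f g \<in> cHom C W (cprd C X Y) \<and>
           ccmp C (cpair C f g) (cp1 C X Y) = f \<and> ccmp C (cpair C f g) (cp2 C X Y) = g \<and>
           (\<forall>h\<in>cHom C W (cprd C X Y).
              ccmp C h (cp1 C X Y) = f \<and> ccmp C h (cp2 C X Y) = g \<longrightarrow> h = cpair C f g)))"

definition cfx :: "('a, 'f) cartcat \<Rightarrow> 'a \<Rightarrow> 'a \<Rightarrow> 'f \<Rightarrow> 'f \<Rightarrow> 'f" where
  "cfx C X Y f g = cpair C (ccmp C (cp1 C X Y) f) (ccmp C (cp2 C X Y) g)"

definition cswap :: "('a, 'f) cartcat \<Rightarrow> 'a \<Rightarrow> 'a \<Rightarrow> 'f" where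
  "cswap C X Y = cpair C (cp2 C X Y) (cp1 C X Y)"

definition cassoc :: "('a, 'f) cartcat \<Rightarrow> 'a \<Rightarrow> 'a \<Rightarrow> 'a \<Rightarrow> 'f" where
  "cassoc C X Y Z =
     cpair C (ccmp C (cp1 C (cprd C X Y) Z) (cp1 C X Y))
             (cpair C (ccmp C (cp1 C (cprd C X Y) Z) (cp2 C X Y)) (cp2 C (cprd C X Y) Z))"

section \<open>The additive strict symmetric monoidal category L with finite (bi)products\<close>

record ('o, 'm) addsmc =
  lOb :: "'o set"
  lHom :: "'o \<Rightarrow> 'o \<Rightarrow> 'm set"
  lcmp :: "'m \<Rightarrow> 'm \<Rightarrow> 'm"
  lidn :: "'o \<Rightarrow> 'm"
  tno :: "'o \<Rightarrow> 'o \<Rightarrow> 'o"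
  tnm :: "'m \<Rightarrow> 'm \<Rightarrow> 'm"
  tunit :: 'o
  lsym :: "'o \<Rightarrow> 'o \<Rightarrow> 'm"
  lzero :: "'o \<Rightarrow> 'o \<Rightarrow> 'm"
  lplus :: "'m \<Rightarrow> 'm \<Rightarrow> 'm"
  bpo :: "'o \<Rightarrow> 'o \<Rightarrow> 'o"
  lpj1 :: "'o \<Rightarrow> 'o \<Rightarrow> 'm"
  lpj2 :: "'o \<Rightarrow> 'o \<Rightarrow> 'm"
  lpair :: "'m \<Rightarrow> 'm \<Rightarrow> 'm"
  linj1 :: "'o \<Rightarrow> 'o \<Rightarrow> 'm"
  linj2 :: "'o \<Rightarrow> 'o \<Rightarrow> 'm"
  ltrm :: 'o

definition strict_smc :: "('o, 'm) addsmc \<Rightarrow> bool" where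
  "strict_smc L \<longleftrightarrow>
     is_category (lOb L) (lHom L) (lcmp L) (lidn L) \<and>
     tunit L \<in> lOb L \<and>
     (\<forall>A\<in>lOb L. \<forall>B\<in>lOb L. tno L A B \<in> lOb L) \<and>
     (\<forall>A\<in>lOb L. \<forall>B\<in>lOb L. \<forall>C\<in>lOb L. \<forall>D\<in>lOb L. \<forall>f\<in>lHom L A B. \<forall>g\<in>lHom L C D.
        tnm L f g \<in> lHom L (tno L A C) (tno L B D)) \<and>
     (\<forall>A\<in>lOb L. \<forall>B\<in>lOb L. tnm L (lidn L A) (lidn L B) = lidn L (tno L A B)) \<and>
     (\<forall>A\<in>lOb L. \<forall>B\<in>lOb L. \<forall>C\<in>lOb L. \<forall>A'\<in>lOb L. \<forall>B'\<in>lOb L. \<forall>C'\<in>lOb L.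
        \<forall>f\<in>lHom L A B. \<forall>f'\<in>lHom L B C. \<forall>g\<in>lHom L A' B'. \<forall>g'\<in>lHom L B' C'.
        tnm L (lcmp L f f') (lcmp L g g') = lcmp L (tnm L f g) (tnm L f' g')) \<and>
     (\<forall>A\<in>lOb L. \<forall>B\<in>lOb L. \<forall>C\<in>lOb L. tno L (tno L A B) C = tno L A (tno L B C)) \<and>
     (\<forall>A\<in>lOb L. tno L (tunit L) A = A \<and> tno L A (tunit L) = A) \<and>
     (\<forall>A\<in>lOb L. \<forall>B\<in>lOb L. \<forall>C\<in>lOb L. \<forall>A'\<in>lOb L. \<forall>B'\<in>lOb L. \<forall>C'\<in>lOb L.
        \<forall>f\<in>lHom L A A'. \<forall>g\<in>lHom L B B'. \<forall>h\<in>lHom L C C'.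
        tnm L (tnm L f g) h = tnm L f (tnm L g h)) \<and>
     (\<forall>A\<in>lOb L. \<forall>B\<in>lOb L. \<forall>f\<in>lHom L A B.
        tnm L (lidn L (tunit L)) f = f \<and> tnm L f (lidn L (tunit L)) = f) \<and>
     (\<forall>A\<in>lOb L. \<forall>B\<in>lOb L. lsym L A B \<in> lHom L (tno L A B) (tno L B A)) \<and>
     (\<forall>A\<in>lOb L. \<forall>B\<in>lOb L. \<forall>A'\<in>lOb L. \<forall>B'\<in>lOb L. \<forall>f\<in>lHom L A A'. \<forall>g\<in>lHom L B B'.
        lcmp L (tnm L f g) (lsym L A' B') = lcmp L (lsym L A B) (tnm L g f)) \<and>
     (\<forall>A\<in>lOb L. \<forall>B\<in>lOb L. lcmp L (lsym L A B) (lsym L B A) = lidn L (tno L A B)) \<and>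
     (\<forall>A\<in>lOb L. \<forall>B\<in>lOb L. \<forall>C\<in>lOb L.
        lsym L A (tno L B C) = lcmp L (tnm L (lsym L A B) (lidn L C)) (tnm L (lidn L B) (lsym L A C))) \<and>
     (\<forall>A\<in>lOb L. lsym L A (tunit L) = lidn L A)"

definition additive :: "('o, 'm) addsmc \<Rightarrow> bool" where
  "additive L \<longleftrightarrow>
     (\<forall>A\<in>lOb L. \<forall>B\<in>lOb L.
        lzero L A B \<in> lHom L A B \<and>
        (\<forall>f\<in>lHom L A B. \<forall>g\<in>lHom L A B. lplus L f g \<in> lHom L A B \<and> lplus L f g = lplus L g f) \<and>
        (\<forall>f\<in>lHom L A B. \<forall>g\<in>lHom L A B. \<forall>h\<in>lHom L A B.
           lplus L (lplus L f g) h = lplus L f (lplus L g h)) \<and>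
        (\<forall>f\<in>lHom L A B. lplus L f (lzero L A B) = f)) \<and>
     (\<forall>A\<in>lOb L. \<forall>B\<in>lOb L. \<forall>C\<in>lOb L. \<forall>f\<in>lHom L A B. \<forall>g\<in>lHom L A B. \<forall>h\<in>lHom L B C.
        lcmp L (lplus L f g) h = lplus L (lcmp L f h) (lcmp L g h) \<and>
        lcmp L (lzero L A B) h = lzero L A C) \<and>
     (\<forall>A\<in>lOb L. \<forall>B\<in>lOb L. \<forall>C\<in>lOb L. \<forall>h\<in>lHom L A B. \<forall>f\<in>lHom L B C. \<forall>g\<in>lHom L B C.
        lcmp L h (lplus L f g) = lplus L (lcmp L h f) (lcmp L h g) \<and>
        lcmp L h (lzero L B C) = lzero L A C) \<and>
     (\<forall>A\<in>lOb L. \<forall>B\<in>lOb L. \<forall>C\<in>lOb L. \<forall>D\<in>lOb L.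
        \<forall>f\<in>lHom L A B. \<forall>g\<in>lHom L A B. \<forall>h\<in>lHom L C D.
        tnm L (lplus L f g) h = lplus L (tnm L f h) (tnm L g h) \<and>
        tnm L h (lplus L f g) = lplus L (tnm L h f) (tnm L h g) \<and>
        tnm L (lzero L A B) h = lzero L (tno L A C) (tno L B D) \<and>
        tnm L h (lzero L A B) = lzero L (tno L C A) (tno L D B))"

definition has_biproducts :: "('o, 'm) addsmc \<Rightarrow> bool" where
  "has_biproducts L \<longleftrightarrow>
     ltrm L \<in> lOb L \<and>
     (\<forall>A\<in>lOb L. lHom L A (ltrm L) = {lzero L A (ltrm L)}) \<and>
     (\<forall>A\<in>lOb L. \<forall>B\<in>lOb L.
        bpo L A B \<in> lOb L \<and>
        lpj1 L A B \<in> lHom L (bpo L A B) A \<and> lpj2 L A B \<in> lHom L (bpo L A B) B \<and>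
        linj1 L A B \<in> lHom L A (bpo L A B) \<and> linj2 L A B \<in> lHom L B (bpo L A B) \<and>
        lcmp L (linj1 L A B) (lpj1 L A B) = lidn L A \<and>
        lcmp L (linj2 L A B) (lpj2 L A B) = lidn L B \<and>
        lcmp L (linj1 L A B) (lpj2 L A B) = lzero L A B \<and>
        lcmp L (linj2 L A B) (lpj1 L A B) = lzero L B A \<and>
        lplus L (lcmp L (lpj1 L A B) (linj1 L A B)) (lcmp L (lpj2 L A B) (linj2 L A B))
          = lidn L (bpo L A B) \<and>
        (\<forall>W\<in>lOb L. \<forall>u\<in>lHom L W A. \<forall>v\<in>lHom L W B.
           lpair L u v \<in> lHom L W (bpo L A B) \<and>
           lcmp L (lpair L u v) (lpj1 L A B) = u \<and> lcmp L (lpair L u v) (lpj2 L A B) = v \<and>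
           (\<forall>h\<in>lHom L W (bpo L A B).
              lcmp L h (lpj1 L A B) = u \<and> lcmp L h (lpj2 L A B) = v \<longrightarrow> h = lpair L u v)))"

section \<open>LNL adjunction data\<close>

record ('a, 'f, 'o, 'm) lnl =
  Fo :: "'a \<Rightarrow> 'o"
  Fm :: "'f \<Rightarrow> 'm"
  Uo :: "'o \<Rightarrow> 'a"
  Um :: "'m \<Rightarrow> 'f"
  eta :: "'a \<Rightarrow> 'f"
  eps :: "'o \<Rightarrow> 'm"
  mm :: "'a \<Rightarrow> 'a \<Rightarrow> 'm"
  mminv :: "'a \<Rightarrow> 'a \<Rightarrow> 'm"
  m1 :: 'm
  m1inv :: 'm
  nn :: "'o \<Rightarrow> 'o \<Rightarrow> 'f"
  n1 :: 'f

definition lnl_adjunction ::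
  "('a, 'f) cartcat \<Rightarrow> ('o, 'm) addsmc \<Rightarrow> ('a, 'f, 'o, 'm) lnl \<Rightarrow> bool" where
  "lnl_adjunction C L A \<longleftrightarrow>
     \<comment> \<open>F : C \<rightarrow> L functor\<close>
     (\<forall>X\<in>cOb C. Fo A X \<in> lOb L \<and> Fm A (cidn C X) = lidn L (Fo A X)) \<and>
     (\<forall>X\<in>cOb C. \<forall>Y\<in>cOb C. \<forall>f\<in>cHom C X Y. Fm A f \<in> lHom L (Fo A X) (Fo A Y)) \<and>
     (\<forall>X\<in>cOb C. \<forall>Y\<in>cOb C. \<forall>Z\<in>cOb C. \<forall>f\<in>cHom C X Y. \<forall>g\<in>cHom C Y Z.
        Fm A (ccmp C f g) = lcmp L (Fm A f) (Fm A g)) \<and>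
     \<comment> \<open>U : L \<rightarrow> C functor\<close>
     (\<forall>B\<in>lOb L. Uo A B \<in> cOb C \<and> Um A (lidn L B) = cidn C (Uo A B)) \<and>
     (\<forall>B\<in>lOb L. \<forall>B'\<in>lOb L. \<forall>u\<in>lHom L B B'. Um A u \<in> cHom C (Uo A B) (Uo A B')) \<and>
     (\<forall>B\<in>lOb L. \<forall>B'\<in>lOb L. \<forall>B''\<in>lOb L. \<forall>u\<in>lHom L B B'. \<forall>v\<in>lHom L B' B''.
        Um A (lcmp L u v) = ccmp C (Um A u) (Um A v)) \<and>
     \<comment> \<open>adjunction F \<turnstile> U with unit eta and counit eps\<close>
     (\<forall>X\<in>cOb C. eta A X \<in> cHom C X (Uo A (Fo A X))) \<and>
     (\<forall>X\<in>cOb C. \<forall>Y\<in>cOb C. \<forall>f\<in>cHom C X Y.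
        ccmp C f (eta A Y) = ccmp C (eta A X) (Um A (Fm A f))) \<and>
     (\<forall>B\<in>lOb L. eps A B \<in> lHom L (Fo A (Uo A B)) B) \<and>
     (\<forall>B\<in>lOb L. \<forall>B'\<in>lOb L. \<forall>u\<in>lHom L B B'.
        lcmp L (Fm A (Um A u)) (eps A B') = lcmp L (eps A B) u) \<and>
     (\<forall>X\<in>cOb C. lcmp L (Fm A (eta A X)) (eps A (Fo A X)) = lidn L (Fo A X)) \<and>
     (\<forall>B\<in>lOb L. ccmp C (eta A (Uo A B)) (Um A (eps A B)) = cidn C (Uo A B)) \<and>
     \<comment> \<open>F strong symmetric monoidal via m, m1\<close>
     (\<forall>X\<in>cOb C. \<forall>Y\<in>cOb C.
        mm A X Y \<in> lHom L (tno L (Fo A X) (Fo A Y)) (Fo A (cprd C X Y)) \<and>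
        mminv A X Y \<in> lHom L (Fo A (cprd C X Y)) (tno L (Fo A X) (Fo A Y)) \<and>
        lcmp L (mm A X Y) (mminv A X Y) = lidn L (tno L (Fo A X) (Fo A Y)) \<and>
        lcmp L (mminv A X Y) (mm A X Y) = lidn L (Fo A (cprd C X Y))) \<and>
     m1 A \<in> lHom L (tunit L) (Fo A (ctrm C)) \<and>
     m1inv A \<in> lHom L (Fo A (ctrm C)) (tunit L) \<and>
     lcmp L (m1 A) (m1inv A) = lidn L (tunit L) \<and>
     lcmp L (m1inv A) (m1 A) = lidn L (Fo A (ctrm C)) \<and>
     (\<forall>X\<in>cOb C. \<forall>Y\<in>cOb C. \<forall>X'\<in>cOb C. \<forall>Y'\<in>cOb C. \<forall>f\<in>cHom C X X'. \<forall>g\<in>cHom C Y Y'.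
        lcmp L (tnm L (Fm A f) (Fm A g)) (mm A X' Y') = lcmp L (mm A X Y) (Fm A (cfx C X Y f g))) \<and>
     (\<forall>X\<in>cOb C. \<forall>Y\<in>cOb C. \<forall>Z\<in>cOb C.
        lcmp L (lcmp L (tnm L (mm A X Y) (lidn L (Fo A Z))) (mm A (cprd C X Y) Z)) (Fm A (cassoc C X Y Z))
        = lcmp L (tnm L (lidn L (Fo A X)) (mm A Y Z)) (mm A X (cprd C Y Z))) \<and>
     (\<forall>X\<in>cOb C.
        lcmp L (lcmp L (tnm L (m1 A) (lidn L (Fo A X))) (mm A (ctrm C) X)) (Fm A (cp2 C (ctrm C) X))
          = lidn L (Fo A X) \<and>
        lcmp L (lcmp L (tnm L (lidn L (Fo A X)) (m1 A)) (mm A X (ctrm C))) (Fm A (cp1 C X (ctrm C)))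
          = lidn L (Fo A X)) \<and>
     (\<forall>X\<in>cOb C. \<forall>Y\<in>cOb C.
        lcmp L (mm A X Y) (Fm A (cswap C X Y)) = lcmp L (lsym L (Fo A X) (Fo A Y)) (mm A Y X)) \<and>
     \<comment> \<open>U lax symmetric monoidal via n, n1\<close>
     (\<forall>B\<in>lOb L. \<forall>B'\<in>lOb L. nn A B B' \<in> cHom C (cprd C (Uo A B) (Uo A B')) (Uo A (tno L B B'))) \<and>
     n1 A \<in> cHom C (ctrm C) (Uo A (tunit L)) \<and>
     (\<forall>B\<in>lOb L. \<forall>B'\<in>lOb L. \<forall>D\<in>lOb L. \<forall>D'\<in>lOb L. \<forall>u\<in>lHom L B D. \<forall>v\<in>lHom L B' D'.
        ccmp C (cfx C (Uo A B) (Uo A B') (Um A u) (Um A v)) (nn A D D')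
          = ccmp C (nn A B B') (Um A (tnm L u v))) \<and>
     (\<forall>B\<in>lOb L. \<forall>B'\<in>lOb L. \<forall>B''\<in>lOb L.
        ccmp C (cfx C (cprd C (Uo A B) (Uo A B')) (Uo A B'') (nn A B B') (cidn C (Uo A B''))) (nn A (tno L B B') B'')
          = ccmp C (ccmp C (cassoc C (Uo A B) (Uo A B') (Uo A B''))
                     (cfx C (Uo A B) (cprd C (Uo A B') (Uo A B'')) (cidn C (Uo A B)) (nn A B' B'')))
                   (nn A B (tno L B' B''))) \<and>
     (\<forall>B\<in>lOb L.
        ccmp C (cfx C (ctrm C) (Uo A B) (n1 A) (cidn C (Uo A B))) (nn A (tunit L) B) = cp2 C (ctrm C) (Uo A B) \<and>
        ccmp C (cfx C (Uo A B) (ctrm C) (cidn C (Uo A B)) (n1 A)) (nn A B (tunit L)) = cp1 C (Uo A B) (ctrm C)) \<and>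
     (\<forall>B\<in>lOb L. \<forall>B'\<in>lOb L.
        ccmp C (nn A B B') (Um A (lsym L B B')) = ccmp C (cswap C (Uo A B) (Uo A B')) (nn A B' B)) \<and>
     \<comment> \<open>the adjunction is monoidal: unit and counit are monoidal natural transformations\<close>
     (\<forall>X\<in>cOb C. \<forall>Y\<in>cOb C.
        ccmp C (ccmp C (cfx C X Y (eta A X) (eta A Y)) (nn A (Fo A X) (Fo A Y))) (Um A (mm A X Y))
          = eta A (cprd C X Y)) \<and>
     ccmp C (n1 A) (Um A (m1 A)) = eta A (ctrm C) \<and>
     (\<forall>B\<in>lOb L. \<forall>B'\<in>lOb L.
        lcmp L (lcmp L (mm A (Uo A B) (Uo A B')) (Fm A (nn A B B'))) (eps A (tno L B B'))
          = tnm L (eps A B) (eps A B')) \<and>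
     lcmp L (lcmp L (m1 A) (Fm A (n1 A))) (eps A (tunit L)) = lidn L (tunit L)"

section \<open>The category LS(C)\<close>

definition cX :: "('a, 'f) cartcat \<Rightarrow> ('o, 'm) addsmc \<Rightarrow> ('a, 'f, 'o, 'm) lnl \<Rightarrow> 'a \<Rightarrow> 'm" where
  "cX C L A X = lcmp L (Fm A (cpair C (cidn C X) (cidn C X))) (mminv A X X)"

definition wX :: "('a, 'f) cartcat \<Rightarrow> ('o, 'm) addsmc \<Rightarrow> ('a, 'f, 'o, 'm) lnl \<Rightarrow> 'a \<Rightarrow> 'm" where
  "wX C L A X = lcmp L (Fm A (cbang C X)) (m1inv A)"

definition ls_hom :: "('a, 'f) cartcat \<Rightarrow> ('o, 'm) addsmc \<Rightarrow> ('a, 'f, 'o, 'm) lnl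
    \<Rightarrow> 'a \<times> 'o \<Rightarrow> 'a \<times> 'o \<Rightarrow> ('f \<times> 'm) set" where
  "ls_hom C L A XA YB = {(f, u). f \<in> cHom C (fst XA) (fst YB) \<and>
                                  u \<in> lHom L (tno L (Fo A (fst XA)) (snd XA)) (snd YB)}"

definition ls_comp :: "('a, 'f) cartcat \<Rightarrow> ('o, 'm) addsmc \<Rightarrow> ('a, 'f, 'o, 'm) lnl
    \<Rightarrow> 'a \<Rightarrow> 'o \<Rightarrow> 'f \<times> 'm \<Rightarrow> 'f \<times> 'm \<Rightarrow> 'f \<times> 'm" where
  "ls_comp C L A X B0 fu gv =
     (ccmp C (fst fu) (fst gv),
      lcmp L (lcmp L (tnm L (cX C L A X) (lidn L B0)) (tnm L (Fm A (fst fu)) (snd fu))) (snd gv))"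

definition ls_id :: "('a, 'f) cartcat \<Rightarrow> ('o, 'm) addsmc \<Rightarrow> ('a, 'f, 'o, 'm) lnl
    \<Rightarrow> 'a \<Rightarrow> 'o \<Rightarrow> 'f \<times> 'm" where
  "ls_id C L A X B0 = (cidn C X, tnm L (wX C L A X) (lidn L B0))"

definition ls_is_inverse :: "('a, 'f) cartcat \<Rightarrow> ('o, 'm) addsmc \<Rightarrow> ('a, 'f, 'o, 'm) lnl
    \<Rightarrow> 'a \<times> 'o \<Rightarrow> 'a \<times> 'o \<Rightarrow> 'f \<times> 'm \<Rightarrow> 'f \<times> 'm \<Rightarrow> bool" where
  "ls_is_inverse C L A XA YB h k \<longleftrightarrow>
     h \<in> ls_hom C L A XA YB \<and> k \<in> ls_hom C L A YB XA \<and>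
     ls_comp C L A (fst XA) (snd XA) h k = ls_id C L A (fst XA) (snd XA) \<and>
     ls_comp C L A (fst YB) (snd YB) k h = ls_id C L A (fst YB) (snd YB)"

definition ls_inv :: "('a, 'f) cartcat \<Rightarrow> ('o, 'm) addsmc \<Rightarrow> ('a, 'f, 'o, 'm) lnl
    \<Rightarrow> 'a \<times> 'o \<Rightarrow> 'a \<times> 'o \<Rightarrow> 'f \<times> 'm \<Rightarrow> 'f \<times> 'm" where
  "ls_inv C L A XA YB h = (THE k. ls_is_inverse C L A XA YB h k)"

text \<open>Pairing in the fibre over X: <(id,u),(id,v)>_X = (id, <u,v>)\<close>
definition fib_pair :: "('a, 'f) cartcat \<Rightarrow> ('o, 'm) addsmc \<Rightarrow> 'a \<Rightarrow> 'f \<times> 'm \<Rightarrow> 'f \<times> 'm \<Rightarrow> 'f \<times> 'm" where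
  "fib_pair C L X fu gv = (cidn C X, lpair L (snd fu) (snd gv))"

text \<open>Reindexing h^* (id_Y, v) = (id_X, (F h \<otimes> id_B); v) along h : X \<rightarrow> Y, for v out of (Y,B)\<close>
definition reindex :: "('a, 'f) cartcat \<Rightarrow> ('o, 'm) addsmc \<Rightarrow> ('a, 'f, 'o, 'm) lnl
    \<Rightarrow> 'a \<Rightarrow> 'f \<Rightarrow> 'o \<Rightarrow> 'f \<times> 'm \<Rightarrow> 'f \<times> 'm" where
  "reindex C L A X h B v = (cidn C X, lcmp L (tnm L (Fm A h) (lidn L B)) (snd v))"

definition ls_pair :: "('a, 'f) cartcat \<Rightarrow> ('o, 'm) addsmc \<Rightarrow> 'f \<times> 'm \<Rightarrow> 'f \<times> 'm \<Rightarrow> 'f \<times> 'm" where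
  "ls_pair C L fu gv = (cpair C (fst fu) (fst gv), lpair L (snd fu) (snd gv))"

section \<open>Generalised differential Seely categories\<close>

text \<open>The functor T : C \<rightarrow> LS(C) with ls \<circ> T = id: T(X) = (X, Tl X), T(f) = (f, Tm f)\<close>
record ('a, 'f, 'o, 'm) tfun =
  Tl :: "'a \<Rightarrow> 'o"
  Tm :: "'f \<Rightarrow> 'm"

definition Tmor :: "('a, 'f, 'o, 'm) tfun \<Rightarrow> 'f \<Rightarrow> 'f \<times> 'm" where
  "Tmor T f = (f, Tm T f)"

definition phi :: "('a, 'f) cartcat \<Rightarrow> ('o, 'm) addsmc \<Rightarrow> ('a, 'f, 'o, 'm) tfun \<Rightarrow> 'a \<Rightarrow> 'a \<Rightarrow> 'f \<times> 'm" where
  "phi C L T X Y = ls_pair C L (Tmor T (cp1 C X Y)) (Tmor T (cp2 C X Y))"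

definition phi_inv :: "('a, 'f) cartcat \<Rightarrow> ('o, 'm) addsmc \<Rightarrow> ('a, 'f, 'o, 'm) lnl
    \<Rightarrow> ('a, 'f, 'o, 'm) tfun \<Rightarrow> 'a \<Rightarrow> 'a \<Rightarrow> 'f \<times> 'm" where
  "phi_inv C L A T X Y =
     ls_inv C L A (cprd C X Y, Tl T (cprd C X Y)) (cprd C X Y, bpo L (Tl T X) (Tl T Y)) (phi C L T X Y)"

text \<open>i_2^{X,Y} = iota_2^{X \<times> Y} ; phi^{-1}_{X,Y}\<close>
definition i2 :: "('a, 'f) cartcat \<Rightarrow> ('o, 'm) addsmc \<Rightarrow> ('a, 'f, 'o, 'm) lnl
    \<Rightarrow> ('a, 'f, 'o, 'm) tfun \<Rightarrow> 'a \<Rightarrow> 'a \<Rightarrow> 'f \<times> 'm" where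
  "i2 C L A T X Y =
     ls_comp C L A (cprd C X Y) (Tl T Y)
       (cidn C (cprd C X Y), tnm L (wX C L A (cprd C X Y)) (linj2 L (Tl T X) (Tl T Y)))
       (phi_inv C L A T X Y)"

definition brk :: "('a, 'f) cartcat \<Rightarrow> ('o, 'm) addsmc \<Rightarrow> ('a, 'f, 'o, 'm) lnl
    \<Rightarrow> 'a \<Rightarrow> 'o \<Rightarrow> 'f \<times> 'm \<Rightarrow> 'f" where
  "brk C L A X B fu =
     cpair C (ccmp C (cp1 C X (Uo A B)) (fst fu))
       (ccmp C (ccmp C (cfx C X (Uo A B) (eta A X) (cidn C (Uo A B))) (nn A (Fo A X) B)) (Um A (snd fu)))"

definition Wmap :: "('a, 'f) cartcat \<Rightarrow> ('o, 'm) addsmc \<Rightarrow> ('a, 'f, 'o, 'm) lnl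
    \<Rightarrow> 'a \<Rightarrow> 'o \<Rightarrow> 'f \<times> 'm \<Rightarrow> 'f \<times> 'm" where
  "Wmap C L A X B fu = (brk C L A X B fu, lcmp L (tnm L (Fm A (cp1 C X (Uo A B))) (lidn L B)) (snd fu))"

definition gdsc :: "('a, 'f) cartcat \<Rightarrow> ('o, 'm) addsmc \<Rightarrow> ('a, 'f, 'o, 'm) lnl
    \<Rightarrow> ('a, 'f, 'o, 'm) tfun \<Rightarrow> bool" where
  "gdsc C L A T \<longleftrightarrow>
     cartesian C \<and> strict_smc L \<and> additive L \<and> has_biproducts L \<and> lnl_adjunction C L A \<and>
     \<comment> \<open>(t.1) T is a functor C \<rightarrow> LS(C) with ls \<circ> T = id\<close>
     (\<forall>X\<in>cOb C. Tl T X \<in> lOb L) \<and>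
     (\<forall>X\<in>cOb C. \<forall>Y\<in>cOb C. \<forall>f\<in>cHom C X Y. Tmor T f \<in> ls_hom C L A (X, Tl T X) (Y, Tl T Y)) \<and>
     (\<forall>X\<in>cOb C. Tmor T (cidn C X) = ls_id C L A X (Tl T X)) \<and>
     (\<forall>X\<in>cOb C. \<forall>Y\<in>cOb C. \<forall>Z\<in>cOb C. \<forall>f\<in>cHom C X Y. \<forall>g\<in>cHom C Y Z.
        Tmor T (ccmp C f g) = ls_comp C L A X (Tl T X) (Tmor T f) (Tmor T g)) \<and>
     \<comment> \<open>(t.1) phi_{X,Y} is an isomorphism\<close>
     (\<forall>X\<in>cOb C. \<forall>Y\<in>cOb C. \<exists>k. ls_is_inverse C L A
        (cprd C X Y, Tl T (cprd C X Y)) (cprd C X Y, bpo L (Tl T X) (Tl T Y)) (phi C L T X Y) k) \<and>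
     \<comment> \<open>(t.2) T(U(B)) = (U(B), B)\<close>
     (\<forall>B\<in>lOb L. Tl T (Uo A B) = B) \<and>
     \<comment> \<open>(t.3)\<close>
     (\<forall>X\<in>cOb C. \<forall>Y\<in>cOb C. \<forall>B\<in>lOb L. \<forall>B'\<in>lOb L. \<forall>fu\<in>ls_hom C L A (X, B) (Y, B').
        ls_comp C L A (cprd C X (Uo A B)) B (Wmap C L A X B fu) (i2 C L A T Y (Uo A B'))
        = ls_comp C L A (cprd C X (Uo A B)) B (i2 C L A T X (Uo A B)) (Tmor T (brk C L A X B fu)))"

definition Dif :: "('a, 'f) cartcat \<Rightarrow> ('a, 'f, 'o, 'm) tfun \<Rightarrow> 'a \<Rightarrow> 'f \<Rightarrow> 'f \<times> 'm" where
  "Dif C T X f = (cidn C X, Tm T f)"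

end

theory Submission
  imports Defs
begin

locale G =
  fixes C :: "('a,'f) cartcat" and L :: "('o,'m) addsmc" and A :: "('a,'f,'o,'m) lnl"
    and T :: "('a,'f,'o,'m) tfun"
  assumes gd: "gdsc C L A T"
begin

lemma cart: "cartesian C" using gd by (simp add: gdsc_def)
lemma smc: "strict_smc L" using gd by (simp add: gdsc_def)
lemma bip: "has_biproducts L" using gd by (simp add: gdsc_def)
lemma lnl: "lnl_adjunction C L A" using gd by (simp add: gdsc_def)

lemma cid[intro]: "X \<in> cOb C \<Longrightarrow> cidn C X \<in> cHom C X X"
  using cart by (simp add: cartesian_def is_category_def)
lemma ccmp_hom[intro]: "f \<in> cHom C X Y \<Longrightarrow> g \<in> cHom C Y Z \<Longrightarrow> X \<in> cOb C \<Longrightarrow> Y \<in> cOb C \<Longrightarrow> Z \<in> cOb C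
   \<Longrightarrow> ccmp C f g \<in> cHom C X Z"
  using cart by (simp add: cartesian_def is_category_def)
lemma cidl: "f \<in> cHom C X Y \<Longrightarrow> X \<in> cOb C \<Longrightarrow> Y \<in> cOb C \<Longrightarrow> ccmp C (cidn C X) f = f"
  using cart by (simp add: cartesian_def is_category_def)
lemma cidr: "f \<in> cHom C X Y \<Longrightarrow> X \<in> cOb C \<Longrightarrow> Y \<in> cOb C \<Longrightarrow> ccmp C f (cidn C Y) = f"
  using cart by (simp add: cartesian_def is_category_def)
lemma cassoc': "f \<in> cHom C W X \<Longrightarrow> g \<in> cHom C X Y \<Longrightarrow> h \<in> cHom C Y Z \<Longrightarrow> W \<in> cOb C \<Longrightarrow> X \<in> cOb C \<Longrightarrow> Y \<in> cOb C \<Longrightarrow> Z \<in> cOb C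
   \<Longrightarrow> ccmp C (ccmp C f g) h = ccmp C f (ccmp C g h)"
  using cart by (simp add: cartesian_def is_category_def)
lemma ctrm[simp,intro]: "ctrm C \<in> cOb C" using cart by (simp add: cartesian_def)
lemma cbang[intro]: "X \<in> cOb C \<Longrightarrow> cbang C X \<in> cHom C X (ctrm C)" using cart by (simp add: cartesian_def)
lemma cbang_uniq: "X \<in> cOb C \<Longrightarrow> h \<in> cHom C X (ctrm C) \<Longrightarrow> h = cbang C X" using cart by (simp add: cartesian_def)
lemma cprd[simp,intro]: "X \<in> cOb C \<Longrightarrow> Y \<in> cOb C \<Longrightarrow> cprd C X Y \<in> cOb C" using cart by (simp add: cartesian_def)
lemma cp1[intro]: "X \<in> cOb C \<Longrightarrow> Y \<in> cOb C \<Longrightarrow> cp1 C X Y \<in> cHom C (cprd C X Y) X" using cart by (simp add: cartesian_def)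
lemma cp2[intro]: "X \<in> cOb C \<Longrightarrow> Y \<in> cOb C \<Longrightarrow> cp2 C X Y \<in> cHom C (cprd C X Y) Y" using cart by (simp add: cartesian_def)
lemma cpair[intro]: "f \<in> cHom C W X \<Longrightarrow> g \<in> cHom C W Y \<Longrightarrow> W \<in> cOb C \<Longrightarrow> X \<in> cOb C \<Longrightarrow> Y \<in> cOb C \<Longrightarrow> cpair C f g \<in> cHom C W (cprd C X Y)"
  using cart by (simp add: cartesian_def)
lemma cpair_p1: "f \<in> cHom C W X \<Longrightarrow> g \<in> cHom C W Y \<Longrightarrow> W \<in> cOb C \<Longrightarrow> X \<in> cOb C \<Longrightarrow> Y \<in> cOb C \<Longrightarrow> ccmp C (cpair C f g) (cp1 C X Y) = f"
  using cart by (simp add: cartesian_def)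
lemma cpair_p2: "f \<in> cHom C W X \<Longrightarrow> g \<in> cHom C W Y \<Longrightarrow> W \<in> cOb C \<Longrightarrow> X \<in> cOb C \<Longrightarrow> Y \<in> cOb C \<Longrightarrow> ccmp C (cpair C f g) (cp2 C X Y) = g"
  using cart by (simp add: cartesian_def)
lemma cpair_uniq: "h \<in> cHom C W (cprd C X Y) \<Longrightarrow> W \<in> cOb C \<Longrightarrow> X \<in> cOb C \<Longrightarrow> Y \<in> cOb C \<Longrightarrow> cpair C (ccmp C h (cp1 C X Y)) (ccmp C h (cp2 C X Y)) = h"
proof -
  assume a: "h \<in> cHom C W (cprd C X Y)" "W \<in> cOb C" "X \<in> cOb C" "Y \<in> cOb C"
  have "ccmp C h (cp1 C X Y) \<in> cHom C W X" "ccmp C h (cp2 C X Y) \<in> cHom C W Y" using a by auto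
  then show ?thesis using cart a by (simp add: cartesian_def)
qed

lemma lid[intro]: "B \<in> lOb L \<Longrightarrow> lidn L B \<in> lHom L B B"
  using smc by (simp add: strict_smc_def is_category_def)
lemma lcmp_hom[intro]: "f \<in> lHom L X Y \<Longrightarrow> g \<in> lHom L Y Z \<Longrightarrow> X \<in> lOb L \<Longrightarrow> Y \<in> lOb L \<Longrightarrow> Z \<in> lOb L
   \<Longrightarrow> lcmp L f g \<in> lHom L X Z"
  using smc by (simp add: strict_smc_def is_category_def)
lemma lidl: "f \<in> lHom L X Y \<Longrightarrow> X \<in> lOb L \<Longrightarrow> Y \<in> lOb L \<Longrightarrow> lcmp L (lidn L X) f = f"
  using smc by (simp add: strict_smc_def is_category_def)
lemma lidr: "f \<in> lHom L X Y \<Longrightarrow> X \<in> lOb L \<Longrightarrow> Y \<in> lOb L \<Longrightarrow> lcmp L f (lidn L Y) = f"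
  using smc by (simp add: strict_smc_def is_category_def)
lemma lassoc: "f \<in> lHom L W X \<Longrightarrow> g \<in> lHom L X Y \<Longrightarrow> h \<in> lHom L Y Z \<Longrightarrow> W \<in> lOb L \<Longrightarrow> X \<in> lOb L \<Longrightarrow> Y \<in> lOb L \<Longrightarrow> Z \<in> lOb L
   \<Longrightarrow> lcmp L (lcmp L f g) h = lcmp L f (lcmp L g h)"
  using smc by (simp add: strict_smc_def is_category_def)
lemma tunit[simp,intro]: "tunit L \<in> lOb L" using smc by (simp add: strict_smc_def)
lemma tno[simp,intro]: "B \<in> lOb L \<Longrightarrow> B' \<in> lOb L \<Longrightarrow> tno L B B' \<in> lOb L" using smc by (simp add: strict_smc_def)
lemma tnm[intro]: "f \<in> lHom L A1 B1 \<Longrightarrow> g \<in> lHom L C1 D1 \<Longrightarrow> A1 \<in> lOb L \<Longrightarrow> B1 \<in> lOb L \<Longrightarrow> C1 \<in> lOb L \<Longrightarrow> D1 \<in> lOb L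
  \<Longrightarrow> tnm L f g \<in> lHom L (tno L A1 C1) (tno L B1 D1)" using smc by (simp add: strict_smc_def)
lemma tnm_id: "B \<in> lOb L \<Longrightarrow> B' \<in> lOb L \<Longrightarrow> tnm L (lidn L B) (lidn L B') = lidn L (tno L B B')"
  using smc by (simp add: strict_smc_def)
lemma interchange: "f \<in> lHom L A1 B1 \<Longrightarrow> f' \<in> lHom L B1 C1 \<Longrightarrow> g \<in> lHom L A2 B2 \<Longrightarrow> g' \<in> lHom L B2 C2 \<Longrightarrow>
  A1 \<in> lOb L \<Longrightarrow> B1 \<in> lOb L \<Longrightarrow> C1 \<in> lOb L \<Longrightarrow> A2 \<in> lOb L \<Longrightarrow> B2 \<in> lOb L \<Longrightarrow> C2 \<in> lOb L \<Longrightarrow>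
  tnm L (lcmp L f f') (lcmp L g g') = lcmp L (tnm L f g) (tnm L f' g')"
  using smc by (simp add: strict_smc_def)
lemma tno_assoc[simp]: "B1 \<in> lOb L \<Longrightarrow> B2 \<in> lOb L \<Longrightarrow> B3 \<in> lOb L \<Longrightarrow> tno L (tno L B1 B2) B3 = tno L B1 (tno L B2 B3)"
  using smc by (simp add: strict_smc_def)
lemma tno_unitl[simp]: "B \<in> lOb L \<Longrightarrow> tno L (tunit L) B = B" using smc by (simp add: strict_smc_def)
lemma tno_unitr[simp]: "B \<in> lOb L \<Longrightarrow> tno L B (tunit L) = B" using smc by (simp add: strict_smc_def)
lemma tnm_assoc: "f \<in> lHom L A1 B1 \<Longrightarrow> g \<in> lHom L A2 B2 \<Longrightarrow> h \<in> lHom L A3 B3 \<Longrightarrow>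
  A1 \<in> lOb L \<Longrightarrow> B1 \<in> lOb L \<Longrightarrow> A2 \<in> lOb L \<Longrightarrow> B2 \<in> lOb L \<Longrightarrow> A3 \<in> lOb L \<Longrightarrow> B3 \<in> lOb L \<Longrightarrow>
  tnm L (tnm L f g) h = tnm L f (tnm L g h)"
  using smc by (simp add: strict_smc_def)
lemma tnm_unitl: "f \<in> lHom L A1 B1 \<Longrightarrow> A1 \<in> lOb L \<Longrightarrow> B1 \<in> lOb L \<Longrightarrow> tnm L (lidn L (tunit L)) f = f"
  using smc by (simp add: strict_smc_def)
lemma tnm_unitr: "f \<in> lHom L A1 B1 \<Longrightarrow> A1 \<in> lOb L \<Longrightarrow> B1 \<in> lOb L \<Longrightarrow> tnm L f (lidn L (tunit L)) = f"
  using smc by (simp add: strict_smc_def)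

lemma bpo[simp,intro]: "B \<in> lOb L \<Longrightarrow> B' \<in> lOb L \<Longrightarrow> bpo L B B' \<in> lOb L" using bip by (simp add: has_biproducts_def)
lemma lpj1[intro]: "B \<in> lOb L \<Longrightarrow> B' \<in> lOb L \<Longrightarrow> lpj1 L B B' \<in> lHom L (bpo L B B') B" using bip by (simp add: has_biproducts_def)
lemma lpj2[intro]: "B \<in> lOb L \<Longrightarrow> B' \<in> lOb L \<Longrightarrow> lpj2 L B B' \<in> lHom L (bpo L B B') B'" using bip by (simp add: has_biproducts_def)
lemma lpair[intro]: "u \<in> lHom L W B \<Longrightarrow> v \<in> lHom L W B' \<Longrightarrow> W \<in> lOb L \<Longrightarrow> B \<in> lOb L \<Longrightarrow> B' \<in> lOb L \<Longrightarrow> lpair L u v \<in> lHom L W (bpo L B B')"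
  using bip by (simp add: has_biproducts_def)
lemma lpair_p1: "u \<in> lHom L W B \<Longrightarrow> v \<in> lHom L W B' \<Longrightarrow> W \<in> lOb L \<Longrightarrow> B \<in> lOb L \<Longrightarrow> B' \<in> lOb L \<Longrightarrow> lcmp L (lpair L u v) (lpj1 L B B') = u"
  using bip by (simp add: has_biproducts_def)
lemma lpair_p2: "u \<in> lHom L W B \<Longrightarrow> v \<in> lHom L W B' \<Longrightarrow> W \<in> lOb L \<Longrightarrow> B \<in> lOb L \<Longrightarrow> B' \<in> lOb L \<Longrightarrow> lcmp L (lpair L u v) (lpj2 L B B') = v"
  using bip by (simp add: has_biproducts_def)
lemma lpair_uniq: "h \<in> lHom L W (bpo L B B') \<Longrightarrow> W \<in> lOb L \<Longrightarrow> B \<in> lOb L \<Longrightarrow> B' \<in> lOb L \<Longrightarrow>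
   lcmp L h (lpj1 L B B') = u \<Longrightarrow> lcmp L h (lpj2 L B B') = v \<Longrightarrow> h = lpair L u v"
proof -
  assume a: "h \<in> lHom L W (bpo L B B')" "W \<in> lOb L" "B \<in> lOb L" "B' \<in> lOb L"
     "lcmp L h (lpj1 L B B') = u" "lcmp L h (lpj2 L B B') = v"
  have "u \<in> lHom L W B" "v \<in> lHom L W B'" using a by (auto simp del: tno_assoc)
  then show ?thesis using bip a by (simp add: has_biproducts_def)
qed

lemma Fo[simp,intro]: "X \<in> cOb C \<Longrightarrow> Fo A X \<in> lOb L" using lnl by (simp add: lnl_adjunction_def)
lemma Fid: "X \<in> cOb C \<Longrightarrow> Fm A (cidn C X) = lidn L (Fo A X)" using lnl by (simp add: lnl_adjunction_def)
lemma Fm[intro]: "f \<in> cHom C X Y \<Longrightarrow> X \<in> cOb C \<Longrightarrow> Y \<in> cOb C \<Longrightarrow> Fm A f \<in> lHom L (Fo A X) (Fo A Y)" using lnl by (simp add: lnl_adjunction_def)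
lemma Fcmp: "f \<in> cHom C X Y \<Longrightarrow> g \<in> cHom C Y Z \<Longrightarrow> X \<in> cOb C \<Longrightarrow> Y \<in> cOb C \<Longrightarrow> Z \<in> cOb C \<Longrightarrow> Fm A (ccmp C f g) = lcmp L (Fm A f) (Fm A g)"
  using lnl by (simp add: lnl_adjunction_def)
lemma mm[intro]: "X \<in> cOb C \<Longrightarrow> Y \<in> cOb C \<Longrightarrow> mm A X Y \<in> lHom L (tno L (Fo A X) (Fo A Y)) (Fo A (cprd C X Y))" using lnl by (simp add: lnl_adjunction_def)
lemma mminv[intro]: "X \<in> cOb C \<Longrightarrow> Y \<in> cOb C \<Longrightarrow> mminv A X Y \<in> lHom L (Fo A (cprd C X Y)) (tno L (Fo A X) (Fo A Y))" using lnl by (simp add: lnl_adjunction_def)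
lemma mm_inv1: "X \<in> cOb C \<Longrightarrow> Y \<in> cOb C \<Longrightarrow> lcmp L (mm A X Y) (mminv A X Y) = lidn L (tno L (Fo A X) (Fo A Y))" using lnl by (simp add: lnl_adjunction_def)
lemma mm_inv2: "X \<in> cOb C \<Longrightarrow> Y \<in> cOb C \<Longrightarrow> lcmp L (mminv A X Y) (mm A X Y) = lidn L (Fo A (cprd C X Y))" using lnl by (simp add: lnl_adjunction_def)
lemma m1[intro]: "m1 A \<in> lHom L (tunit L) (Fo A (ctrm C))" using lnl by (simp add: lnl_adjunction_def)
lemma m1inv[intro]: "m1inv A \<in> lHom L (Fo A (ctrm C)) (tunit L)" using lnl by (simp add: lnl_adjunction_def)
lemma m1_inv1: "lcmp L (m1 A) (m1inv A) = lidn L (tunit L)" using lnl by (simp add: lnl_adjunction_def)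
lemma m1_inv2: "lcmp L (m1inv A) (m1 A) = lidn L (Fo A (ctrm C))" using lnl by (simp add: lnl_adjunction_def)
lemma mm_nat: "f \<in> cHom C X X' \<Longrightarrow> g \<in> cHom C Y Y' \<Longrightarrow> X \<in> cOb C \<Longrightarrow> Y \<in> cOb C \<Longrightarrow> X' \<in> cOb C \<Longrightarrow> Y' \<in> cOb C \<Longrightarrow>
  lcmp L (tnm L (Fm A f) (Fm A g)) (mm A X' Y') = lcmp L (mm A X Y) (Fm A (cfx C X Y f g))"
  using lnl by (simp add: lnl_adjunction_def)
lemma mm_assoc: "X \<in> cOb C \<Longrightarrow> Y \<in> cOb C \<Longrightarrow> Z \<in> cOb C \<Longrightarrow>
  lcmp L (lcmp L (tnm L (mm A X Y) (lidn L (Fo A Z))) (mm A (cprd C X Y) Z)) (Fm A (cassoc C X Y Z))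
        = lcmp L (tnm L (lidn L (Fo A X)) (mm A Y Z)) (mm A X (cprd C Y Z))"
  using lnl by (simp add: lnl_adjunction_def)
lemma mm_unitl: "X \<in> cOb C \<Longrightarrow> lcmp L (lcmp L (tnm L (m1 A) (lidn L (Fo A X))) (mm A (ctrm C) X)) (Fm A (cp2 C (ctrm C) X))
          = lidn L (Fo A X)"
  using lnl by (simp add: lnl_adjunction_def)
lemma mm_unitr: "X \<in> cOb C \<Longrightarrow> lcmp L (lcmp L (tnm L (lidn L (Fo A X)) (m1 A)) (mm A X (ctrm C))) (Fm A (cp1 C X (ctrm C)))
          = lidn L (Fo A X)"
  using lnl by (simp add: lnl_adjunction_def)

lemma Tl[simp,intro]: "X \<in> cOb C \<Longrightarrow> Tl T X \<in> lOb L" using gd by (simp add: gdsc_def)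
lemma Thom: "f \<in> cHom C X Y \<Longrightarrow> X \<in> cOb C \<Longrightarrow> Y \<in> cOb C \<Longrightarrow> Tmor T f \<in> ls_hom C L A (X, Tl T X) (Y, Tl T Y)" using gd by (simp add: gdsc_def)
lemma Tid: "X \<in> cOb C \<Longrightarrow> Tmor T (cidn C X) = ls_id C L A X (Tl T X)" using gd by (simp add: gdsc_def)
lemma Tcmp: "f \<in> cHom C X Y \<Longrightarrow> g \<in> cHom C Y Z \<Longrightarrow> X \<in> cOb C \<Longrightarrow> Y \<in> cOb C \<Longrightarrow> Z \<in> cOb C \<Longrightarrow>
  Tmor T (ccmp C f g) = ls_comp C L A X (Tl T X) (Tmor T f) (Tmor T g)" using gd by (simp add: gdsc_def)
lemma phi_iso: "X \<in> cOb C \<Longrightarrow> Y \<in> cOb C \<Longrightarrow> \<exists>k. ls_is_inverse C L A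
        (cprd C X Y, Tl T (cprd C X Y)) (cprd C X Y, bpo L (Tl T X) (Tl T Y)) (phi C L T X Y) k"
  using gd by (simp add: gdsc_def)


lemma Delta[intro]: "X \<in> cOb C \<Longrightarrow> cpair C (cidn C X) (cidn C X) \<in> cHom C X (cprd C X X)" by blast
lemma cX_hom[intro]: "X \<in> cOb C \<Longrightarrow> cX C L A X \<in> lHom L (Fo A X) (tno L (Fo A X) (Fo A X))"
  unfolding cX_def by blast
lemma wX_hom[intro]: "X \<in> cOb C \<Longrightarrow> wX C L A X \<in> lHom L (Fo A X) (tunit L)"
  unfolding wX_def by blast
lemma cfx_hom[intro]: "f \<in> cHom C X X' \<Longrightarrow> g \<in> cHom C Y Y' \<Longrightarrow> X \<in> cOb C \<Longrightarrow> Y \<in> cOb C \<Longrightarrow> X' \<in> cOb C \<Longrightarrow> Y' \<in> cOb C \<Longrightarrow>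
   cfx C X Y f g \<in> cHom C (cprd C X Y) (cprd C X' Y')"
  unfolding cfx_def by blast


lemma tnm_ul[intro]: "f \<in> lHom L A1 (tunit L) \<Longrightarrow> g \<in> lHom L C1 D1 \<Longrightarrow> A1 \<in> lOb L \<Longrightarrow> C1 \<in> lOb L \<Longrightarrow> D1 \<in> lOb L
  \<Longrightarrow> tnm L f g \<in> lHom L (tno L A1 C1) D1" using tnm[of f A1 "tunit L" g C1 D1] by simp
lemma tnm_ur[intro]: "f \<in> lHom L A1 B1 \<Longrightarrow> g \<in> lHom L C1 (tunit L) \<Longrightarrow> A1 \<in> lOb L \<Longrightarrow> C1 \<in> lOb L \<Longrightarrow> B1 \<in> lOb L
  \<Longrightarrow> tnm L f g \<in> lHom L (tno L A1 C1) B1" using tnm[of f A1 B1 g C1 "tunit L"] by simp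
lemma tnm_dl[intro]: "f \<in> lHom L (tunit L) B1 \<Longrightarrow> g \<in> lHom L C1 D1 \<Longrightarrow> B1 \<in> lOb L \<Longrightarrow> C1 \<in> lOb L \<Longrightarrow> D1 \<in> lOb L
  \<Longrightarrow> tnm L f g \<in> lHom L C1 (tno L B1 D1)" using tnm[of f "tunit L" B1 g C1 D1] by simp
lemma tnm_dr[intro]: "f \<in> lHom L A1 B1 \<Longrightarrow> g \<in> lHom L (tunit L) D1 \<Longrightarrow> A1 \<in> lOb L \<Longrightarrow> B1 \<in> lOb L \<Longrightarrow> D1 \<in> lOb L
  \<Longrightarrow> tnm L f g \<in> lHom L A1 (tno L B1 D1)" using tnm[of f A1 B1 g "tunit L" D1] by simp


lemma iso_swap:
  assumes h: "a \<in> lHom L P Q" "b \<in> lHom L Q R" "c \<in> lHom L P S" "d \<in> lHom L S R"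
     "b' \<in> lHom L R Q" "c' \<in> lHom L S P"
   and o: "P \<in> lOb L" "Q \<in> lOb L" "R \<in> lOb L" "S \<in> lOb L"
   and e: "lcmp L b b' = lidn L Q" "lcmp L c' c = lidn L S" "lcmp L a b = lcmp L c d"
  shows "lcmp L c' a = lcmp L d b'"
proof -
  have "lcmp L c' a = lcmp L (lcmp L c' a) (lidn L Q)" using h o by (metis lcmp_hom lidr)
  also have "\<dots> = lcmp L (lcmp L c' a) (lcmp L b b')" using e by simp
  also have "\<dots> = lcmp L (lcmp L (lcmp L c' a) b) b'" by (insert h o, (rule lassoc[symmetric]; blast))
  also have "\<dots> = lcmp L (lcmp L c' (lcmp L a b)) b'" using h o lassoc[of c' S P a Q b R] by simp
  also have "\<dots> = lcmp L (lcmp L c' (lcmp L c d)) b'" using e by simp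
  also have "\<dots> = lcmp L (lcmp L (lcmp L c' c) d) b'" using h o lassoc[of c' S P c S d R] by simp
  also have "\<dots> = lcmp L d b'" using e h o lidl by simp
  finally show ?thesis .
qed


lemma lid_lid[simp]: "B \<in> lOb L \<Longrightarrow> lcmp L (lidn L B) (lidn L B) = lidn L B" using lidl lid by blast
lemma tnm_id'[simp]: "B \<in> lOb L \<Longrightarrow> B' \<in> lOb L \<Longrightarrow> tnm L (lidn L B) (lidn L B') = lidn L (tno L B B')" by (rule tnm_id)

lemma lassoc_in: "f \<in> lHom L W X \<Longrightarrow> g \<in> lHom L X Y \<Longrightarrow> h \<in> lHom L Y Z \<Longrightarrow> W \<in> lOb L \<Longrightarrow> X \<in> lOb L \<Longrightarrow> Y \<in> lOb L \<Longrightarrow> Z \<in> lOb L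
   \<Longrightarrow> lcmp L k (lcmp L (lcmp L f g) h) = lcmp L k (lcmp L f (lcmp L g h))"
  using lassoc by metis

lemma counit_l: assumes X: "X \<in> cOb C"
  shows "lcmp L (cX C L A X) (tnm L (wX C L A X) (lidn L (Fo A X))) = lidn L (Fo A X)"
proof -
  define F where "F = Fo A X"
  define F1 where "F1 = Fo A (ctrm C)"
  define b where "b = cbang C X"
  define P where "P = cfx C X X b (cidn C X)"
  define m where "m = mminv A X X"
  define n where "n = mminv A (ctrm C) X"
  define t where "t = tnm L (m1inv A) (lidn L F)"
  define t' where "t' = tnm L (m1 A) (lidn L F)"
  define D where "D = cpair C (cidn C X) (cidn C X)"
  define p2 where "p2 = cp2 C (ctrm C) X"
  have oF: "F \<in> lOb L" "F1 \<in> lOb L" using X by (auto simp: F_def F1_def)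
  have hb: "b \<in> cHom C X (ctrm C)" using X by (auto simp: b_def)
  have hP: "P \<in> cHom C (cprd C X X) (cprd C (ctrm C) X)" using X hb by (auto simp: P_def)
  have hD: "D \<in> cHom C X (cprd C X X)" using X by (auto simp: D_def)
  have hp2: "p2 \<in> cHom C (cprd C (ctrm C) X) X" using X by (auto simp: p2_def)
  have hm: "m \<in> lHom L (Fo A (cprd C X X)) (tno L F F)" using X by (auto simp: m_def F_def)
  have hn: "n \<in> lHom L (Fo A (cprd C (ctrm C) X)) (tno L F1 F)" using X by (auto simp: n_def F_def F1_def)
  have ht: "t \<in> lHom L (tno L F1 F) F" using X oF by (auto simp: t_def F1_def)
  have ht': "t' \<in> lHom L F (tno L F1 F)" using X oF by (auto simp: t'_def F1_def)
  have hFb: "Fm A b \<in> lHom L F F1" using X hb by (auto simp: F_def F1_def)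
  have hFbt: "tnm L (Fm A b) (lidn L F) \<in> lHom L (tno L F F) (tno L F1 F)" using hFb oF by blast
  have s1: "tnm L (wX C L A X) (lidn L F) = lcmp L (tnm L (Fm A b) (lidn L F)) t"
  proof -
    have "tnm L (lcmp L (Fm A b) (m1inv A)) (lcmp L (lidn L F) (lidn L F)) = lcmp L (tnm L (Fm A b) (lidn L F)) t"
      using interchange[OF hFb _ lid[OF oF(1)] lid[OF oF(1)], of "m1inv A" "tunit L"] m1inv oF by (simp add: F1_def t_def)
    moreover have "lcmp L (lidn L F) (lidn L F) = lidn L F" using oF by (intro lidl) auto
    ultimately show ?thesis by (simp add: wX_def b_def)
  qed
  have s2: "lcmp L m (tnm L (Fm A b) (lidn L F)) = lcmp L (Fm A P) n"
  proof (rule iso_swap[where b="mm A (ctrm C) X" and c="mm A X X"])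
    show "lcmp L (tnm L (Fm A b) (lidn L F)) (mm A (ctrm C) X) = lcmp L (mm A X X) (Fm A P)"
      using mm_nat[OF hb cid[OF X] X X ctrm X] by (simp add: Fid X F_def P_def)
  next show "tnm L (Fm A b) (lidn L F) \<in> lHom L (tno L F F) (tno L F1 F)" by (rule hFbt)
  next show "mm A (ctrm C) X \<in> lHom L (tno L F1 F) (Fo A (cprd C (ctrm C) X))" using X by (simp add: mm F_def F1_def)
  next show "mm A X X \<in> lHom L (tno L F F) (Fo A (cprd C X X))" using X by (simp add: mm F_def)
  next show "Fm A P \<in> lHom L (Fo A (cprd C X X)) (Fo A (cprd C (ctrm C) X))" using X hP by (simp add: Fm)
  next show "n \<in> lHom L (Fo A (cprd C (ctrm C) X)) (tno L F1 F)" by (rule hn)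
  next show "m \<in> lHom L (Fo A (cprd C X X)) (tno L F F)" by (rule hm)
  qed (insert X oF, simp_all add: F_def F1_def m_def n_def mm_inv1 mm_inv2)
  have tt': "lcmp L t t' = lidn L (tno L F1 F)"
  proof -
    have "lcmp L t t' = tnm L (lcmp L (m1inv A) (m1 A)) (lcmp L (lidn L F) (lidn L F))"
      using interchange[OF m1inv m1 lid[OF oF(1)] lid[OF oF(1)]] oF by (simp add: F1_def t_def t'_def)
    also have "\<dots> = lidn L (tno L F1 F)" using oF by (simp add: m1_inv2 lidl tnm_id F1_def)
    finally show ?thesis .
  qed
  have u: "lcmp L (lcmp L t' (mm A (ctrm C) X)) (Fm A p2) = lidn L F"
    using mm_unitl[OF X] by (simp add: t'_def F_def p2_def)
  have hmm: "mm A (ctrm C) X \<in> lHom L (tno L F1 F) (Fo A (cprd C (ctrm C) X))" using X by (auto simp: F_def F1_def)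
  have hFp2: "Fm A p2 \<in> lHom L (Fo A (cprd C (ctrm C) X)) F" using hp2 X by (auto simp: F_def)
  have s3: "lcmp L n t = Fm A p2"
  proof -
    have "lcmp L n t = lcmp L n (lcmp L t (lidn L F))" using ht oF lidr by simp
    also have "\<dots> = lcmp L n (lcmp L t (lcmp L (lcmp L t' (mm A (ctrm C) X)) (Fm A p2)))" using u by simp
    also have "\<dots> = lcmp L n (lcmp L t (lcmp L t' (lcmp L (mm A (ctrm C) X) (Fm A p2))))"
      using lassoc[OF ht' hmm hFp2] X oF by simp
    also have "\<dots> = lcmp L n (lcmp L (lcmp L t t') (lcmp L (mm A (ctrm C) X) (Fm A p2)))"
      using lassoc[OF ht ht' lcmp_hom[OF hmm hFp2]] X oF by auto
    also have "\<dots> = lcmp L n (lcmp L (mm A (ctrm C) X) (Fm A p2))"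
      using tt' lidl[OF lcmp_hom[OF hmm hFp2]] X oF by auto
    also have "\<dots> = lcmp L (lcmp L n (mm A (ctrm C) X)) (Fm A p2)"
      using lassoc[OF hn hmm hFp2] X oF by simp
    also have "\<dots> = Fm A p2" using mm_inv2[OF ctrm X] lidl[OF hFp2] X oF by (simp add: n_def)
    finally show ?thesis .
  qed
  have s4: "lcmp L (Fm A D) (lcmp L (Fm A P) (Fm A p2)) = lidn L F"
  proof -
    have "ccmp C P p2 = cp2 C X X" unfolding P_def cfx_def p2_def
      using cpair_p2[OF ccmp_hom[OF cp1[OF X X] hb] ccmp_hom[OF cp2[OF X X] cid[OF X]]] cidr[OF cp2[OF X X]] X
      by simp
    moreover have "ccmp C D (cp2 C X X) = cidn C X" unfolding D_def using cpair_p2[OF cid[OF X] cid[OF X]] X by simp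
    ultimately have "ccmp C D (ccmp C P p2) = cidn C X" by simp
    moreover have "lcmp L (Fm A D) (lcmp L (Fm A P) (Fm A p2)) = Fm A (ccmp C D (ccmp C P p2))"
      using Fcmp[OF hP hp2] Fcmp[OF hD ccmp_hom[OF hP hp2]] X by simp
    ultimately show ?thesis using Fid X by (simp add: F_def)
  qed
  have "lcmp L (cX C L A X) (tnm L (wX C L A X) (lidn L F))
      = lcmp L (lcmp L (Fm A D) m) (lcmp L (tnm L (Fm A b) (lidn L F)) t)"
    by (simp add: cX_def s1 D_def m_def)
  also have "\<dots> = lcmp L (Fm A D) (lcmp L m (lcmp L (tnm L (Fm A b) (lidn L F)) t))"
    using lassoc[OF Fm[OF hD] hm lcmp_hom[OF hFbt ht]] X oF by auto
  also have "\<dots> = lcmp L (Fm A D) (lcmp L (lcmp L m (tnm L (Fm A b) (lidn L F))) t)"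
    using lassoc[OF hm hFbt ht] X oF by simp
  also have "\<dots> = lcmp L (Fm A D) (lcmp L (lcmp L (Fm A P) n) t)" using s2 by simp
  also have "\<dots> = lcmp L (Fm A D) (lcmp L (Fm A P) (lcmp L n t))"
    using lassoc[OF Fm[OF hP] hn ht] X oF by auto
  also have "\<dots> = lidn L F" using s3 s4 by simp
  finally show ?thesis by (simp add: F_def)
qed

lemma counit_r: assumes X: "X \<in> cOb C"
  shows "lcmp L (cX C L A X) (tnm L (lidn L (Fo A X)) (wX C L A X)) = lidn L (Fo A X)"
proof -
  define F where "F = Fo A X"
  define F1 where "F1 = Fo A (ctrm C)"
  define b where "b = cbang C X"
  define P where "P = cfx C X X (cidn C X) b"
  define m where "m = mminv A X X"
  define n where "n = mminv A X (ctrm C)"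
  define t where "t = tnm L (lidn L F) (m1inv A)"
  define t' where "t' = tnm L (lidn L F) (m1 A)"
  define D where "D = cpair C (cidn C X) (cidn C X)"
  define p2 where "p2 = cp1 C X (ctrm C)"
  have oF: "F \<in> lOb L" "F1 \<in> lOb L" using X by (auto simp: F_def F1_def)
  have hb: "b \<in> cHom C X (ctrm C)" using X by (auto simp: b_def)
  have hP: "P \<in> cHom C (cprd C X X) (cprd C X (ctrm C))" using X hb by (auto simp: P_def)
  have hD: "D \<in> cHom C X (cprd C X X)" using X by (auto simp: D_def)
  have hp2: "p2 \<in> cHom C (cprd C X (ctrm C)) X" using X by (auto simp: p2_def)
  have hm: "m \<in> lHom L (Fo A (cprd C X X)) (tno L F F)" using X by (auto simp: m_def F_def)
  have hn: "n \<in> lHom L (Fo A (cprd C X (ctrm C))) (tno L F F1)" using X by (auto simp: n_def F_def F1_def)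
  have ht: "t \<in> lHom L (tno L F F1) F" using X oF by (auto simp: t_def F1_def)
  have ht': "t' \<in> lHom L F (tno L F F1)" using X oF by (auto simp: t'_def F1_def)
  have hFb: "Fm A b \<in> lHom L F F1" using X hb by (auto simp: F_def F1_def)
  have hFbt: "tnm L (lidn L F) (Fm A b) \<in> lHom L (tno L F F) (tno L F F1)" using hFb oF by blast
  have s1: "tnm L (lidn L F) (wX C L A X) = lcmp L (tnm L (lidn L F) (Fm A b)) t"
  proof -
    have "tnm L (lcmp L (lidn L F) (lidn L F)) (lcmp L (Fm A b) (m1inv A)) = lcmp L (tnm L (lidn L F) (Fm A b)) t"
      using interchange[OF lid[OF oF(1)] lid[OF oF(1)] hFb m1inv[folded F1_def]] oF by (simp add: F1_def t_def)
    moreover have "lcmp L (lidn L F) (lidn L F) = lidn L F" using oF by (intro lidl) auto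
    ultimately show ?thesis by (simp add: wX_def b_def)
  qed
  have s2: "lcmp L m (tnm L (lidn L F) (Fm A b)) = lcmp L (Fm A P) n"
  proof (rule iso_swap[where b="mm A X (ctrm C)" and c="mm A X X"])
    show "lcmp L (tnm L (lidn L F) (Fm A b)) (mm A X (ctrm C)) = lcmp L (mm A X X) (Fm A P)"
      using mm_nat[OF cid[OF X] hb X X X ctrm] by (simp add: Fid X F_def P_def)
  next show "tnm L (lidn L F) (Fm A b) \<in> lHom L (tno L F F) (tno L F F1)" by (rule hFbt)
  next show "mm A X (ctrm C) \<in> lHom L (tno L F F1) (Fo A (cprd C X (ctrm C)))" using X by (simp add: mm F_def F1_def)
  next show "mm A X X \<in> lHom L (tno L F F) (Fo A (cprd C X X))" using X by (simp add: mm F_def)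
  next show "Fm A P \<in> lHom L (Fo A (cprd C X X)) (Fo A (cprd C X (ctrm C)))" using X hP by (simp add: Fm)
  next show "n \<in> lHom L (Fo A (cprd C X (ctrm C))) (tno L F F1)" by (rule hn)
  next show "m \<in> lHom L (Fo A (cprd C X X)) (tno L F F)" by (rule hm)
  qed (insert X oF, simp_all add: F_def F1_def m_def n_def mm_inv1 mm_inv2)
  have tt': "lcmp L t t' = lidn L (tno L F F1)"
  proof -
    have "lcmp L t t' = tnm L (lcmp L (lidn L F) (lidn L F)) (lcmp L (m1inv A) (m1 A))"
      using interchange[OF lid[OF oF(1)] lid[OF oF(1)] m1inv m1] oF by (simp add: F1_def t_def t'_def)
    also have "\<dots> = lidn L (tno L F F1)" using oF by (simp add: m1_inv2 lidl tnm_id F1_def)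
    finally show ?thesis .
  qed
  have u: "lcmp L (lcmp L t' (mm A X (ctrm C))) (Fm A p2) = lidn L F"
    using mm_unitr[OF X] by (simp add: t'_def F_def p2_def)
  have hmm: "mm A X (ctrm C) \<in> lHom L (tno L F F1) (Fo A (cprd C X (ctrm C)))" using X by (auto simp: F_def F1_def)
  have hFp2: "Fm A p2 \<in> lHom L (Fo A (cprd C X (ctrm C))) F" using hp2 X by (auto simp: F_def)
  have s3: "lcmp L n t = Fm A p2"
  proof -
    have "lcmp L n t = lcmp L n (lcmp L t (lidn L F))" using ht oF lidr by simp
    also have "\<dots> = lcmp L n (lcmp L t (lcmp L (lcmp L t' (mm A X (ctrm C))) (Fm A p2)))" using u by simp
    also have "\<dots> = lcmp L n (lcmp L t (lcmp L t' (lcmp L (mm A X (ctrm C)) (Fm A p2))))"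
      using lassoc[OF ht' hmm hFp2] X oF by simp
    also have "\<dots> = lcmp L n (lcmp L (lcmp L t t') (lcmp L (mm A X (ctrm C)) (Fm A p2)))"
      using lassoc[OF ht ht' lcmp_hom[OF hmm hFp2]] X oF by auto
    also have "\<dots> = lcmp L n (lcmp L (mm A X (ctrm C)) (Fm A p2))"
      using tt' lidl[OF lcmp_hom[OF hmm hFp2]] X oF by auto
    also have "\<dots> = lcmp L (lcmp L n (mm A X (ctrm C))) (Fm A p2)"
      using lassoc[OF hn hmm hFp2] X oF by simp
    also have "\<dots> = Fm A p2" using mm_inv2[OF X ctrm] lidl[OF hFp2] X oF by (simp add: n_def)
    finally show ?thesis .
  qed
  have s4: "lcmp L (Fm A D) (lcmp L (Fm A P) (Fm A p2)) = lidn L F"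
  proof -
    have "ccmp C P p2 = cp1 C X X" unfolding P_def cfx_def p2_def
      using cpair_p1[OF ccmp_hom[OF cp1[OF X X] cid[OF X]] ccmp_hom[OF cp2[OF X X] hb]] cidr[OF cp1[OF X X]] X
      by simp
    moreover have "ccmp C D (cp1 C X X) = cidn C X" unfolding D_def using cpair_p1[OF cid[OF X] cid[OF X]] X by simp
    ultimately have "ccmp C D (ccmp C P p2) = cidn C X" by simp
    moreover have "lcmp L (Fm A D) (lcmp L (Fm A P) (Fm A p2)) = Fm A (ccmp C D (ccmp C P p2))"
      using Fcmp[OF hP hp2] Fcmp[OF hD ccmp_hom[OF hP hp2]] X by simp
    ultimately show ?thesis using Fid X by (simp add: F_def)
  qed
  have "lcmp L (cX C L A X) (tnm L (lidn L F) (wX C L A X))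
      = lcmp L (lcmp L (Fm A D) m) (lcmp L (tnm L (lidn L F) (Fm A b)) t)"
    by (simp add: cX_def s1 D_def m_def)
  also have "\<dots> = lcmp L (Fm A D) (lcmp L m (lcmp L (tnm L (lidn L F) (Fm A b)) t))"
    using lassoc[OF Fm[OF hD] hm lcmp_hom[OF hFbt ht]] X oF by auto
  also have "\<dots> = lcmp L (Fm A D) (lcmp L (lcmp L m (tnm L (lidn L F) (Fm A b))) t)"
    using lassoc[OF hm hFbt ht] X oF by simp
  also have "\<dots> = lcmp L (Fm A D) (lcmp L (lcmp L (Fm A P) n) t)" using s2 by simp
  also have "\<dots> = lcmp L (Fm A D) (lcmp L (Fm A P) (lcmp L n t))"
    using lassoc[OF Fm[OF hP] hn ht] X oF by auto
  also have "\<dots> = lidn L F" using s3 s4 by simp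
  finally show ?thesis by (simp add: F_def)
qed


lemma cpair_eqI: "k \<in> cHom C W (cprd C X Y) \<Longrightarrow> W \<in> cOb C \<Longrightarrow> X \<in> cOb C \<Longrightarrow> Y \<in> cOb C \<Longrightarrow>
   ccmp C k (cp1 C X Y) = f \<Longrightarrow> ccmp C k (cp2 C X Y) = g \<Longrightarrow> k = cpair C f g"
  using cpair_uniq by metis

lemma cpair_pre: assumes "k \<in> cHom C V W" "f \<in> cHom C W X" "g \<in> cHom C W Y" "V \<in> cOb C" "W \<in> cOb C" "X \<in> cOb C" "Y \<in> cOb C"
  shows "ccmp C k (cpair C f g) = cpair C (ccmp C k f) (ccmp C k g)"
proof (rule cpair_eqI)
  show "ccmp C k (cpair C f g) \<in> cHom C V (cprd C X Y)" using assms by blast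
  show "ccmp C (ccmp C k (cpair C f g)) (cp1 C X Y) = ccmp C k f"
    using assms cassoc'[OF assms(1) cpair[OF assms(2,3)] cp1] cpair_p1 by simp
  show "ccmp C (ccmp C k (cpair C f g)) (cp2 C X Y) = ccmp C k g"
    using assms cassoc'[OF assms(1) cpair[OF assms(2,3)] cp2] cpair_p2 by simp
qed (use assms in auto)

lemma cpair_cfx: assumes "f \<in> cHom C W X" "g \<in> cHom C W Y" "h \<in> cHom C X X'" "k \<in> cHom C Y Y'"
   "W \<in> cOb C" "X \<in> cOb C" "Y \<in> cOb C" "X' \<in> cOb C" "Y' \<in> cOb C"
  shows "ccmp C (cpair C f g) (cfx C X Y h k) = cpair C (ccmp C f h) (ccmp C g k)"
proof -
  have "ccmp C (cpair C f g) (cfx C X Y h k) = cpair C (ccmp C (cpair C f g) (ccmp C (cp1 C X Y) h)) (ccmp C (cpair C f g) (ccmp C (cp2 C X Y) k))"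
    unfolding cfx_def using assms by (intro cpair_pre) blast+
  also have "\<dots> = cpair C (ccmp C f h) (ccmp C g k)"
    using assms cassoc'[OF cpair[OF assms(1,2)] cp1 assms(3)] cassoc'[OF cpair[OF assms(1,2)] cp2 assms(4)] cpair_p1 cpair_p2
    by simp
  finally show ?thesis .
qed

lemma wX_nat: assumes h: "h \<in> cHom C X Y" and X: "X \<in> cOb C" and Y: "Y \<in> cOb C"
  shows "lcmp L (Fm A h) (wX C L A Y) = wX C L A X"
proof -
  have "lcmp L (Fm A h) (wX C L A Y) = lcmp L (lcmp L (Fm A h) (Fm A (cbang C Y))) (m1inv A)"
    unfolding wX_def using lassoc[OF Fm[OF h] Fm[OF cbang[OF Y]] m1inv] X Y by simp
  also have "\<dots> = lcmp L (Fm A (ccmp C h (cbang C Y))) (m1inv A)" using Fcmp[OF h cbang[OF Y]] X Y by simp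
  also have "ccmp C h (cbang C Y) = cbang C X" using cbang_uniq[OF X ccmp_hom[OF h cbang[OF Y]]] X Y by simp
  finally show ?thesis by (simp add: wX_def)
qed

lemma cX_nat: assumes h: "h \<in> cHom C X Y" and X: "X \<in> cOb C" and Y: "Y \<in> cOb C"
  shows "lcmp L (Fm A h) (cX C L A Y) = lcmp L (cX C L A X) (tnm L (Fm A h) (Fm A h))"
proof -
  define DX where "DX = cpair C (cidn C X) (cidn C X)"
  define DY where "DY = cpair C (cidn C Y) (cidn C Y)"
  define hh where "hh = cfx C X X h h"
  have hDX: "DX \<in> cHom C X (cprd C X X)" using X by (simp add: DX_def Delta)
  have hDY: "DY \<in> cHom C Y (cprd C Y Y)" using Y by (simp add: DY_def Delta)
  have hhh: "hh \<in> cHom C (cprd C X X) (cprd C Y Y)" using X Y h by (simp add: hh_def cfx_hom)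
  have c1: "ccmp C h DY = cpair C h h"
    using cpair_pre[OF h cid[OF Y] cid[OF Y]] X Y h cidr by (simp add: DY_def)
  have c2: "ccmp C DX hh = cpair C h h"
    using cpair_cfx[OF cid[OF X] cid[OF X] h h] X Y h cidl by (simp add: DX_def hh_def)
  have n1: "lcmp L (Fm A hh) (mminv A Y Y) = lcmp L (mminv A X X) (tnm L (Fm A h) (Fm A h))"
  proof (rule iso_swap[symmetric, where b="mm A Y Y" and c="mm A X X"])
    show "lcmp L (tnm L (Fm A h) (Fm A h)) (mm A Y Y) = lcmp L (mm A X X) (Fm A hh)"
      using mm_nat[OF h h X X Y Y] by (simp add: hh_def)
  qed (use X Y h hhh mm_inv1 mm_inv2 in \<open>blast+\<close>)
  have "lcmp L (Fm A h) (cX C L A Y) = lcmp L (lcmp L (Fm A h) (Fm A DY)) (mminv A Y Y)"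
    unfolding cX_def DY_def[symmetric] using lassoc[OF Fm[OF h] Fm[OF hDY] mminv] X Y by simp
  also have "\<dots> = lcmp L (Fm A (ccmp C DX hh)) (mminv A Y Y)" using Fcmp[OF h hDY] X Y c1 c2 by simp
  also have "\<dots> = lcmp L (Fm A DX) (lcmp L (Fm A hh) (mminv A Y Y))"
    using Fcmp[OF hDX hhh] lassoc[OF Fm[OF hDX] Fm[OF hhh] mminv] X Y by simp
  also have "\<dots> = lcmp L (Fm A DX) (lcmp L (mminv A X X) (tnm L (Fm A h) (Fm A h)))" using n1 by simp
  also have "\<dots> = lcmp L (cX C L A X) (tnm L (Fm A h) (Fm A h))"
    unfolding cX_def DX_def[symmetric] using lassoc[OF Fm[OF hDX] mminv tnm[OF Fm[OF h] Fm[OF h]]] X Y by simp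
  finally show ?thesis .
qed


lemma iso_solve:
  assumes h: "a \<in> lHom L P Q" "b \<in> lHom L Q R" "c \<in> lHom L P S" "d \<in> lHom L S R"
     "a' \<in> lHom L Q P" "c' \<in> lHom L S P" "d' \<in> lHom L R S"
   and o: "P \<in> lOb L" "Q \<in> lOb L" "R \<in> lOb L" "S \<in> lOb L"
   and e: "lcmp L a' a = lidn L Q" "lcmp L d d' = lidn L S" "lcmp L c c' = lidn L P" "lcmp L a b = lcmp L c d"
  shows "lcmp L b (lcmp L d' c') = a'"
proof -
  have hdc: "lcmp L d' c' \<in> lHom L R P" using h o by blast
  have "lcmp L b (lcmp L d' c') = lcmp L (lcmp L a' a) (lcmp L b (lcmp L d' c'))"
    using e lidl[OF lcmp_hom[OF h(2) hdc]] o by simp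
  also have "\<dots> = lcmp L a' (lcmp L (lcmp L a b) (lcmp L d' c'))"
    using lassoc[OF h(5) h(1) lcmp_hom[OF h(2) hdc]] lassoc[OF h(1) h(2) hdc] o by simp
  also have "\<dots> = lcmp L a' (lcmp L c (lcmp L (lcmp L d d') c'))"
    using e lassoc[OF h(3) h(4) hdc] lassoc[OF h(4) h(7) h(6)] o by simp
  also have "\<dots> = a'" using e lidl[OF h(6)] lidr[OF h(5)] o by simp
  finally show ?thesis .
qed

lemma coassoc: assumes X: "X \<in> cOb C"
  shows "lcmp L (cX C L A X) (tnm L (cX C L A X) (lidn L (Fo A X))) = lcmp L (cX C L A X) (tnm L (lidn L (Fo A X)) (cX C L A X))"
proof -
  define F where "F = Fo A X"
  define XX where "XX = cprd C X X"
  define D where "D = cpair C (cidn C X) (cidn C X)"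
  define m where "m = mminv A X X"
  define M2 where "M2 = mminv A XX X"
  define M2' where "M2' = mminv A X XX"
  define al where "al = cassoc C X X X"
  define K1 where "K1 = cfx C X X D (cidn C X)"
  define K2 where "K2 = cfx C X X (cidn C X) D"
  define c' where "c' = tnm L (lidn L F) m"
  have oF[simp]: "F \<in> lOb L" using X by (simp add: F_def)
  have XX[simp]: "XX \<in> cOb C" using X by (simp add: XX_def)
  have oFXX[simp]: "Fo A XX \<in> lOb L" using XX by simp
  have hD: "D \<in> cHom C X XX" using X by (simp add: D_def XX_def Delta)
  have hm: "m \<in> lHom L (Fo A XX) (tno L F F)" using X by (simp add: m_def XX_def F_def mminv)
  have hmm: "mm A X X \<in> lHom L (tno L F F) (Fo A XX)" using X by (simp add: XX_def F_def mm)
  have hM2: "M2 \<in> lHom L (Fo A (cprd C XX X)) (tno L (Fo A XX) F)" using X XX by (simp add: M2_def F_def mminv)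
  have hM2': "M2' \<in> lHom L (Fo A (cprd C X XX)) (tno L F (Fo A XX))" using X XX by (simp add: M2'_def F_def mminv)
  have hal: "al \<in> cHom C (cprd C XX X) (cprd C X XX)" using X unfolding al_def cassoc_def XX_def by blast
  have hK1: "K1 \<in> cHom C XX (cprd C XX X)" using cfx_hom[OF hD cid[OF X] X X XX X] by (simp add: K1_def XX_def)
  have hK2: "K2 \<in> cHom C XX (cprd C X XX)" using cfx_hom[OF cid[OF X] hD X X X XX] by (simp add: K2_def XX_def)
  have hc': "c' \<in> lHom L (tno L F (Fo A XX)) (tno L F (tno L F F))"
    using tnm[OF lid[OF oF] hm] oF X XX by (simp add: c'_def)
  have hmI: "tnm L m (lidn L F) \<in> lHom L (tno L (Fo A XX) F) (tno L F (tno L F F))"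
    using tnm[OF hm lid[OF oF]] oF X XX by simp
  have cart1: "ccmp C D (ccmp C K1 al) = ccmp C D K2"
  proof -
    have "ccmp C D K2 = cpair C (cidn C X) D"
      using cpair_cfx[OF cid[OF X] cid[OF X] cid[OF X] hD] X XX cidl[OF hD] cidl[OF cid[OF X]]
      by (simp add: K2_def D_def[symmetric])
    moreover have "ccmp C D K1 = cpair C D (cidn C X)"
      using cpair_cfx[OF cid[OF X] cid[OF X] hD cid[OF X]] X XX cidl[OF hD] cidl[OF cid[OF X]]
      by (simp add: K1_def D_def[symmetric] XX_def)
    moreover have "ccmp C (cpair C D (cidn C X)) al = cpair C (cidn C X) D"
    proof -
      have hk: "cpair C D (cidn C X) \<in> cHom C X (cprd C XX X)" using hD X XX by blast
      have p1: "ccmp C (cpair C D (cidn C X)) (cp1 C XX X) = D" using cpair_p1[OF hD cid[OF X]] X XX by simp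
      have p2: "ccmp C (cpair C D (cidn C X)) (cp2 C XX X) = cidn C X" using cpair_p2[OF hD cid[OF X]] X XX by simp
      have Dp1: "ccmp C D (cp1 C X X) = cidn C X" using cpair_p1[OF cid[OF X] cid[OF X]] X by (simp add: D_def)
      have Dp2: "ccmp C D (cp2 C X X) = cidn C X" using cpair_p2[OF cid[OF X] cid[OF X]] X by (simp add: D_def)
      have e1: "ccmp C (cpair C D (cidn C X)) (ccmp C (cp1 C XX X) (cp1 C X X)) = cidn C X"
        using cassoc'[OF hk cp1[OF XX X] cp1[OF X X, folded XX_def]] p1 Dp1 X XX by (simp add: XX_def)
      have e2: "ccmp C (cpair C D (cidn C X)) (ccmp C (cp1 C XX X) (cp2 C X X)) = cidn C X"
        using cassoc'[OF hk cp1[OF XX X] cp2[OF X X, folded XX_def]] p1 Dp2 X XX by (simp add: XX_def)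
      have e3: "ccmp C (cpair C D (cidn C X)) (cpair C (ccmp C (cp1 C XX X) (cp2 C X X)) (cp2 C XX X)) = D"
        using cpair_pre[OF hk ccmp_hom[OF cp1[OF XX X] cp2[OF X X, folded XX_def]] cp2[OF XX X]] e2 p2 X XX
        by (simp add: XX_def D_def)
      show ?thesis unfolding al_def cassoc_def XX_def[symmetric]
        using cpair_pre[OF hk ccmp_hom[OF cp1[OF XX X] cp1[OF X X, folded XX_def]] cpair[OF ccmp_hom[OF cp1[OF XX X] cp2[OF X X, folded XX_def]] cp2[OF XX X]]]
          e1 e3 X XX by (simp add: XX_def)
    qed
    ultimately show ?thesis using cassoc'[OF hD hK1 hal] X XX by simp
  qed
  have hmmI: "tnm L (mm A X X) (lidn L F) \<in> lHom L (tno L F (tno L F F)) (tno L (Fo A XX) F)"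
    using tnm[OF hmm lid[OF oF]] oF XX by simp
  have hmmX: "mm A XX X \<in> lHom L (tno L (Fo A XX) F) (Fo A (cprd C XX X))" using mm[OF XX X] by (simp add: F_def)
  have inv: "lcmp L (Fm A al) (lcmp L M2' c') = lcmp L M2 (tnm L m (lidn L F))"
  proof (rule iso_solve[where a="lcmp L (tnm L (mm A X X) (lidn L F)) (mm A XX X)" and c="tnm L (lidn L F) (mm A X X)"
        and d="mm A X XX"])
    show "lcmp L (lcmp L (tnm L (mm A X X) (lidn L F)) (mm A XX X)) (Fm A al) =
          lcmp L (tnm L (lidn L F) (mm A X X)) (mm A X XX)"
      using mm_assoc[OF X X X] by (simp add: F_def XX_def al_def)
    show "lcmp L (tnm L (mm A X X) (lidn L F)) (mm A XX X) \<in> lHom L (tno L F (tno L F F)) (Fo A (cprd C XX X))"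
      using lcmp_hom[OF hmmI hmmX] X XX oF by (simp add: F_def)
    show "tnm L (lidn L F) (mm A X X) \<in> lHom L (tno L F (tno L F F)) (tno L F (Fo A XX))"
      using tnm[OF lid[OF oF] hmm] X XX oF by simp
    show "mm A X XX \<in> lHom L (tno L F (Fo A XX)) (Fo A (cprd C X XX))" using mm[OF X XX] by (simp add: F_def)
    show "lcmp L M2 (tnm L m (lidn L F)) \<in> lHom L (Fo A (cprd C XX X)) (tno L F (tno L F F))"
      using lcmp_hom[OF hM2 hmI] X XX by simp
    show "lcmp L (lcmp L M2 (tnm L m (lidn L F))) (lcmp L (tnm L (mm A X X) (lidn L F)) (mm A XX X)) = lidn L (Fo A (cprd C XX X))"
    proof -
      have "lcmp L (tnm L m (lidn L F)) (tnm L (mm A X X) (lidn L F)) = lidn L (tno L (Fo A XX) F)"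
        using interchange[OF hm hmm lid[OF oF] lid[OF oF]] mm_inv2[OF X X] oF X XX by (simp add: m_def XX_def)
      then have "lcmp L (lcmp L M2 (tnm L m (lidn L F))) (lcmp L (tnm L (mm A X X) (lidn L F)) (mm A XX X))
          = lcmp L M2 (lcmp L (lidn L (tno L (Fo A XX) F)) (mm A XX X))"
        using lassoc[OF hM2 hmI lcmp_hom[OF hmmI hmmX]]
          lassoc[OF hmI hmmI hmmX] X XX oF by (simp add: F_def)
      also have "\<dots> = lidn L (Fo A (cprd C XX X))"
        using lidl[OF hmmX] mm_inv2[OF XX X] X XX by (simp add: M2_def F_def)
      finally show ?thesis .
    qed
    show "lcmp L (mm A X XX) M2' = lidn L (tno L F (Fo A XX))" using mm_inv1[OF X XX] by (simp add: M2'_def F_def)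
    show "lcmp L (tnm L (lidn L F) (mm A X X)) c' = lidn L (tno L F (tno L F F))"
      using interchange[OF lid[OF oF] lid[OF oF] hmm hm] mm_inv1[OF X X] oF X by (simp add: c'_def m_def F_def)
  qed (use X XX hM2' hc' hal oF in \<open>simp_all add: Fm\<close>)
  have n1: "lcmp L m (tnm L (Fm A D) (lidn L F)) = lcmp L (Fm A K1) M2"
  proof (rule iso_swap[where b="mm A XX X" and c="mm A X X"])
    show "lcmp L (tnm L (Fm A D) (lidn L F)) (mm A XX X) = lcmp L (mm A X X) (Fm A K1)"
      using mm_nat[OF hD cid[OF X] X X XX X] Fid X by (simp add: K1_def F_def)
  qed (use X XX oF hD hK1 hm hmm mm_inv1 mm_inv2 in \<open>auto simp: M2_def m_def F_def XX_def intro!: tnm Fm mm mminv\<close>)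
  have n2: "lcmp L m (tnm L (lidn L F) (Fm A D)) = lcmp L (Fm A K2) M2'"
  proof (rule iso_swap[where b="mm A X XX" and c="mm A X X"])
    show "lcmp L (tnm L (lidn L F) (Fm A D)) (mm A X XX) = lcmp L (mm A X X) (Fm A K2)"
      using mm_nat[OF cid[OF X] hD X X X XX] Fid X by (simp add: K2_def F_def)
  qed (use X XX oF hD hK2 hm hmm mm_inv1 mm_inv2 in \<open>auto simp: M2'_def m_def F_def XX_def intro!: tnm Fm mm mminv\<close>)
  have t1: "tnm L (cX C L A X) (lidn L F) = lcmp L (tnm L (Fm A D) (lidn L F)) (tnm L m (lidn L F))"
    unfolding cX_def using interchange[OF Fm[OF hD] hm lid[OF oF] lid[OF oF]] X XX oF by (simp add: D_def m_def XX_def F_def)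
  have t2: "tnm L (lidn L F) (cX C L A X) = lcmp L (tnm L (lidn L F) (Fm A D)) c'"
    unfolding cX_def using interchange[OF lid[OF oF] lid[OF oF] Fm[OF hD] hm] X XX oF by (simp add: D_def m_def XX_def F_def c'_def)
  have hFDt: "tnm L (Fm A D) (lidn L F) \<in> lHom L (tno L F F) (tno L (Fo A XX) F)"
    using tnm[OF Fm[OF hD] lid[OF oF]] X XX by (simp add: F_def)
  have hFDt2: "tnm L (lidn L F) (Fm A D) \<in> lHom L (tno L F F) (tno L F (Fo A XX))"
    using tnm[OF lid[OF oF] Fm[OF hD]] X XX by (simp add: F_def)
  have cXD: "cX C L A X = lcmp L (Fm A D) m" by (simp add: cX_def D_def m_def XX_def)
  have hFD: "Fm A D \<in> lHom L F (Fo A XX)" using Fm[OF hD] X XX by (simp add: F_def)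
  have hZ: "lcmp L M2' c' \<in> lHom L (Fo A (cprd C X XX)) (tno L F (tno L F F))" using lcmp_hom[OF hM2' hc'] X XX oF by simp
  have "lcmp L (cX C L A X) (tnm L (cX C L A X) (lidn L F))
      = lcmp L (Fm A D) (lcmp L (lcmp L m (tnm L (Fm A D) (lidn L F))) (tnm L m (lidn L F)))"
    unfolding t1 unfolding cXD using lassoc[OF hFD hm lcmp_hom[OF hFDt hmI]] lassoc[OF hm hFDt hmI] X XX oF by simp
  also have "\<dots> = lcmp L (Fm A D) (lcmp L (Fm A K1) (lcmp L (Fm A al) (lcmp L M2' c')))"
    unfolding n1 using lassoc[OF Fm[OF hK1] hM2 hmI] inv X XX oF by simp
  also have "\<dots> = lcmp L (Fm A (ccmp C D (ccmp C K1 al))) (lcmp L M2' c')"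
    using lassoc[OF Fm[OF hK1] Fm[OF hal] hZ] lassoc[OF hFD Fm[OF ccmp_hom[OF hK1 hal]] hZ]
      Fcmp[OF hK1 hal] Fcmp[OF hD ccmp_hom[OF hK1 hal]] X XX oF by (simp add: F_def)
  also have "\<dots> = lcmp L (Fm A (ccmp C D K2)) (lcmp L M2' c')" using cart1 by simp
  also have "\<dots> = lcmp L (Fm A D) (lcmp L (lcmp L m (tnm L (lidn L F) (Fm A D))) c')"
    unfolding n2 using lassoc[OF hFD Fm[OF hK2] hZ] lassoc[OF Fm[OF hK2] hM2' hc'] Fcmp[OF hD hK2] X XX oF by (simp add: F_def)
  also have "\<dots> = lcmp L (cX C L A X) (tnm L (lidn L F) (cX C L A X))"
    unfolding t2 unfolding cXD using lassoc[OF hFD hm lcmp_hom[OF hFDt2 hc']] lassoc[OF hm hFDt2 hc'] X XX oF by simp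
  finally show ?thesis by (simp add: F_def)
qed


lemma ls_hom_iff: "(f, u) \<in> ls_hom C L A (X, A0) (Y, B) \<longleftrightarrow> f \<in> cHom C X Y \<and> u \<in> lHom L (tno L (Fo A X) A0) B"
  by (simp add: ls_hom_def)

lemma cXI_hom: "X \<in> cOb C \<Longrightarrow> A0 \<in> lOb L \<Longrightarrow> tnm L (cX C L A X) (lidn L A0) \<in> lHom L (tno L (Fo A X) A0) (tno L (Fo A X) (tno L (Fo A X) A0))"
  using tnm[OF cX_hom lid] by simp

lemma ls_comp_hom:
  assumes "(f, u) \<in> ls_hom C L A (X, A0) (Y, B)" "(g, v) \<in> ls_hom C L A (Y, B) (Z, C0)"
    and o: "X \<in> cOb C" "Y \<in> cOb C" "Z \<in> cOb C" "A0 \<in> lOb L" "B \<in> lOb L" "C0 \<in> lOb L"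
  shows "ls_comp C L A X A0 (f, u) (g, v) \<in> ls_hom C L A (X, A0) (Z, C0)"
proof -
  have f: "f \<in> cHom C X Y" and u: "u \<in> lHom L (tno L (Fo A X) A0) B" and g: "g \<in> cHom C Y Z"
    and v: "v \<in> lHom L (tno L (Fo A Y) B) C0" using assms by (auto simp: ls_hom_def)
  have "tnm L (Fm A f) u \<in> lHom L (tno L (Fo A X) (tno L (Fo A X) A0)) (tno L (Fo A Y) B)"
    using tnm[OF Fm[OF f] u] o by simp
  then show ?thesis unfolding ls_comp_def ls_hom_iff fst_conv snd_conv
    using ccmp_hom[OF f g] lcmp_hom[OF lcmp_hom[OF cXI_hom] v] o v by simp
qed

lemma ls_idl:
  assumes "(g, v) \<in> ls_hom C L A (X, A0) (Y, B)" and o: "X \<in> cOb C" "Y \<in> cOb C" "A0 \<in> lOb L" "B \<in> lOb L"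
  shows "ls_comp C L A X A0 (ls_id C L A X A0) (g, v) = (g, v)"
proof -
  have g: "g \<in> cHom C X Y" and v: "v \<in> lHom L (tno L (Fo A X) A0) B" using assms by (auto simp: ls_hom_def)
  have oF: "Fo A X \<in> lOb L" using o by simp
  have e1: "tnm L (Fm A (cidn C X)) (tnm L (wX C L A X) (lidn L A0)) = tnm L (tnm L (lidn L (Fo A X)) (wX C L A X)) (lidn L A0)"
    using tnm_assoc[OF lid[OF oF] wX_hom[OF o(1)] lid[OF o(3)]] Fid o by simp
  have e2: "lcmp L (tnm L (cX C L A X) (lidn L A0)) (tnm L (tnm L (lidn L (Fo A X)) (wX C L A X)) (lidn L A0)) = lidn L (tno L (Fo A X) A0)"
  proof -
    have hh: "tnm L (lidn L (Fo A X)) (wX C L A X) \<in> lHom L (tno L (Fo A X) (Fo A X)) (Fo A X)"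
      using tnm[OF lid[OF oF] wX_hom[OF o(1)]] o by simp
    show ?thesis using interchange[OF cX_hom[OF o(1)] hh lid[OF o(3)] lid[OF o(3)]] counit_r[OF o(1)] o by simp
  qed
  show ?thesis unfolding ls_comp_def ls_id_def fst_conv snd_conv
    using e1 e2 cidl[OF g] lidl[OF v] o by simp
qed

lemma ls_idr:
  assumes "(f, u) \<in> ls_hom C L A (X, A0) (Y, B)" and o: "X \<in> cOb C" "Y \<in> cOb C" "A0 \<in> lOb L" "B \<in> lOb L"
  shows "ls_comp C L A X A0 (f, u) (ls_id C L A Y B) = (f, u)"
proof -
  have f: "f \<in> cHom C X Y" and u: "u \<in> lHom L (tno L (Fo A X) A0) B" using assms by (auto simp: ls_hom_def)
  have oF: "Fo A X \<in> lOb L" using o by simp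
  have hw: "tnm L (wX C L A X) (lidn L (Fo A X)) \<in> lHom L (tno L (Fo A X) (Fo A X)) (Fo A X)"
    using tnm[OF wX_hom[OF o(1)] lid[OF oF]] o by simp
  have hwA: "tnm L (tnm L (wX C L A X) (lidn L (Fo A X))) (lidn L A0) \<in> lHom L (tno L (Fo A X) (tno L (Fo A X) A0)) (tno L (Fo A X) A0)"
    using tnm[OF hw lid[OF o(3)]] o by simp
  have hfu: "tnm L (Fm A f) u \<in> lHom L (tno L (Fo A X) (tno L (Fo A X) A0)) (tno L (Fo A Y) B)"
    using tnm[OF Fm[OF f] u] o by simp
  have hwB: "tnm L (wX C L A Y) (lidn L B) \<in> lHom L (tno L (Fo A Y) B) B"
    using tnm[OF wX_hom[OF o(2)] lid[OF o(4)]] o by simp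
  have e1: "lcmp L (tnm L (Fm A f) u) (tnm L (wX C L A Y) (lidn L B)) = lcmp L (tnm L (tnm L (wX C L A X) (lidn L (Fo A X))) (lidn L A0)) u"
  proof -
    have "lcmp L (tnm L (Fm A f) u) (tnm L (wX C L A Y) (lidn L B)) = tnm L (wX C L A X) u"
      using interchange[OF Fm[OF f] wX_hom[OF o(2)] u lid[OF o(4)]] wX_nat[OF f o(1,2)] lidr[OF u] o by simp
    also have "\<dots> = tnm L (lcmp L (wX C L A X) (lidn L (tunit L))) (lcmp L (lidn L (tno L (Fo A X) A0)) u)"
      using lidr[OF wX_hom[OF o(1)]] lidl[OF u] o by simp
    also have "\<dots> = lcmp L (tnm L (wX C L A X) (lidn L (tno L (Fo A X) A0))) (tnm L (lidn L (tunit L)) u)"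
      using interchange[OF wX_hom[OF o(1)] lid[OF tunit] lid[OF tno[OF oF o(3)]] u] o by simp
    also have "\<dots> = lcmp L (tnm L (tnm L (wX C L A X) (lidn L (Fo A X))) (lidn L A0)) u"
      using tnm_unitl[OF u] tnm_assoc[OF wX_hom[OF o(1)] lid[OF oF] lid[OF o(3)]] o by simp
    finally show ?thesis .
  qed
  have e2: "lcmp L (tnm L (cX C L A X) (lidn L A0)) (tnm L (tnm L (wX C L A X) (lidn L (Fo A X))) (lidn L A0)) = lidn L (tno L (Fo A X) A0)"
    using interchange[OF cX_hom[OF o(1)] hw lid[OF o(3)] lid[OF o(3)]] counit_l[OF o(1)] o by simp
  have "lcmp L (lcmp L (tnm L (cX C L A X) (lidn L A0)) (tnm L (Fm A f) u)) (tnm L (wX C L A Y) (lidn L B)) = u"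
    using lassoc[OF cXI_hom hfu hwB] e1 lassoc[OF cXI_hom hwA u, symmetric] e2 lidl[OF u] o by simp
  then show ?thesis unfolding ls_comp_def ls_id_def fst_conv snd_conv
    using cidr[OF f] o by simp
qed


lemma ls_assoc:
  assumes "(f, u) \<in> ls_hom C L A (X, A0) (Y, B)" "(g, v) \<in> ls_hom C L A (Y, B) (Z, C0)" "(h, w) \<in> ls_hom C L A (Z, C0) (W, D0)"
    and o: "X \<in> cOb C" "Y \<in> cOb C" "Z \<in> cOb C" "W \<in> cOb C" "A0 \<in> lOb L" "B \<in> lOb L" "C0 \<in> lOb L" "D0 \<in> lOb L"
  shows "ls_comp C L A X A0 (ls_comp C L A X A0 (f, u) (g, v)) (h, w) = ls_comp C L A X A0 (f, u) (ls_comp C L A Y B (g, v) (h, w))"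
proof -
  have f: "f \<in> cHom C X Y" and u: "u \<in> lHom L (tno L (Fo A X) A0) B" and g: "g \<in> cHom C Y Z"
    and v: "v \<in> lHom L (tno L (Fo A Y) B) C0" and h: "h \<in> cHom C Z W" and w: "w \<in> lHom L (tno L (Fo A Z) C0) D0"
    using assms by (auto simp: ls_hom_def)
  note oo = o Fo[OF o(1)] Fo[OF o(2)] Fo[OF o(3)] tno[OF Fo[OF o(1)] o(5)]
  define P0 where "P0 = tno L (Fo A X) A0"
  have oP0[simp]: "P0 \<in> lOb L" using oo by (simp add: P0_def)
  define cA where "cA = tnm L (cX C L A X) (lidn L A0)"
  define cXA where "cXA = tnm L (cX C L A X) (lidn L P0)"
  define idcA where "idcA = tnm L (lidn L (Fo A X)) cA"
  define Ffu where "Ffu = tnm L (Fm A f) u"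
  define cYB where "cYB = tnm L (cX C L A Y) (lidn L B)"
  define FFu where "FFu = tnm L (tnm L (Fm A f) (Fm A f)) u"
  define Fgv where "Fgv = tnm L (Fm A g) v"
  define V where "V = lcmp L Ffu v"
  define Ffg where "Ffg = Fm A (ccmp C f g)"
  have hcA: "cA \<in> lHom L P0 (tno L (Fo A X) P0)" using cXI_hom[OF o(1,5)] by (simp add: cA_def P0_def)
  have hcXA: "cXA \<in> lHom L (tno L (Fo A X) P0) (tno L (Fo A X) (tno L (Fo A X) P0))"
    using tnm[OF cX_hom[OF o(1)] lid[OF oP0]] oo by (simp add: cXA_def)
  have hidcA: "idcA \<in> lHom L (tno L (Fo A X) P0) (tno L (Fo A X) (tno L (Fo A X) P0))"
    using tnm[OF lid[OF Fo[OF o(1)]] hcA] oo by (simp add: idcA_def)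
  have u': "u \<in> lHom L P0 B" using u by (simp add: P0_def)
  have hFfu: "Ffu \<in> lHom L (tno L (Fo A X) P0) (tno L (Fo A Y) B)" using tnm[OF Fm[OF f] u'] oo by (simp add: Ffu_def)
  have hcYB: "cYB \<in> lHom L (tno L (Fo A Y) B) (tno L (Fo A Y) (tno L (Fo A Y) B))" using cXI_hom[OF o(2,6)] by (simp add: cYB_def)
  have hFFu: "FFu \<in> lHom L (tno L (Fo A X) (tno L (Fo A X) P0)) (tno L (Fo A Y) (tno L (Fo A Y) B))"
    using tnm[OF tnm[OF Fm[OF f] Fm[OF f]] u'] oo by (simp add: FFu_def)
  have hFgv: "Fgv \<in> lHom L (tno L (Fo A Y) (tno L (Fo A Y) B)) (tno L (Fo A Z) C0)" using tnm[OF Fm[OF g] v] oo by (simp add: Fgv_def)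
  have hV: "V \<in> lHom L (tno L (Fo A X) P0) C0" using lcmp_hom[OF hFfu v] oo by (simp add: V_def)
  have hFfg: "Ffg \<in> lHom L (Fo A X) (Fo A Z)" using Fm[OF ccmp_hom[OF f g]] oo by (simp add: Ffg_def)
  have hFfgV: "tnm L Ffg V \<in> lHom L (tno L (Fo A X) (tno L (Fo A X) P0)) (tno L (Fo A Z) C0)"
    using tnm[OF hFfg hV] oo by simp
  have K1: "tnm L Ffg (lcmp L cA V) = lcmp L idcA (tnm L Ffg V)"
    using interchange[OF lid[OF Fo[OF o(1)]] hFfg hcA hV] lidl[OF hFfg] oo by (simp add: idcA_def)
  have K2: "lcmp L Ffu cYB = lcmp L cXA FFu"
  proof -
    have "lcmp L Ffu cYB = tnm L (lcmp L (Fm A f) (cX C L A Y)) (lcmp L u (lidn L B))"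
      using interchange[OF Fm[OF f] cX_hom[OF o(2)] u' lid[OF o(6)]] oo by (simp add: Ffu_def cYB_def)
    also have "\<dots> = tnm L (lcmp L (cX C L A X) (tnm L (Fm A f) (Fm A f))) (lcmp L (lidn L P0) u)"
      using cX_nat[OF f o(1,2)] lidr[OF u'] lidl[OF u'] oo by simp
    also have "\<dots> = lcmp L cXA FFu"
      using interchange[OF cX_hom[OF o(1)] tnm[OF Fm[OF f] Fm[OF f]] lid[OF oP0] u'] oo by (simp add: cXA_def FFu_def)
    finally show ?thesis .
  qed
  have K3: "lcmp L FFu Fgv = tnm L Ffg V"
  proof -
    have "FFu = tnm L (Fm A f) Ffu"
      using tnm_assoc[OF Fm[OF f] Fm[OF f] u'] oo by (simp add: FFu_def Ffu_def)
    then show ?thesis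
      using interchange[OF Fm[OF f] Fm[OF g] hFfu v] Fcmp[OF f g] oo by (simp add: Fgv_def Ffg_def V_def)
  qed
  have K4: "lcmp L cA idcA = lcmp L cA cXA"
  proof -
    have "idcA = tnm L (tnm L (lidn L (Fo A X)) (cX C L A X)) (lidn L A0)"
      using tnm_assoc[OF lid[OF Fo[OF o(1)]] cX_hom[OF o(1)] lid[OF o(5)]] oo by (simp add: idcA_def cA_def)
    moreover have "cXA = tnm L (tnm L (cX C L A X) (lidn L (Fo A X))) (lidn L A0)"
      using tnm_assoc[OF cX_hom[OF o(1)] lid[OF Fo[OF o(1)]] lid[OF o(5)]] oo by (simp add: cXA_def P0_def)
    moreover have "tnm L (tnm L (lidn L (Fo A X)) (cX C L A X)) (lidn L A0) \<in> lHom L (tno L (Fo A X) (tno L (Fo A X) A0)) (tno L (Fo A X) (tno L (Fo A X) (tno L (Fo A X) A0)))"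
      using tnm[OF tnm[OF lid[OF Fo[OF o(1)]] cX_hom[OF o(1)]] lid[OF o(5)]] oo by simp
    moreover have "tnm L (lidn L (Fo A X)) (cX C L A X) \<in> lHom L (tno L (Fo A X) (Fo A X)) (tno L (Fo A X) (tno L (Fo A X) (Fo A X)))"
      using tnm[OF lid[OF Fo[OF o(1)]] cX_hom[OF o(1)]] oo by simp
    moreover have "tnm L (cX C L A X) (lidn L (Fo A X)) \<in> lHom L (tno L (Fo A X) (Fo A X)) (tno L (Fo A X) (tno L (Fo A X) (Fo A X)))"
      using tnm[OF cX_hom[OF o(1)] lid[OF Fo[OF o(1)]]] oo by simp
    ultimately show ?thesis
      using interchange[OF cX_hom[OF o(1)] _ lid[OF o(5)] lid[OF o(5)], of "tnm L (lidn L (Fo A X)) (cX C L A X)"]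
        interchange[OF cX_hom[OF o(1)] _ lid[OF o(5)] lid[OF o(5)], of "tnm L (cX C L A X) (lidn L (Fo A X))"]
        coassoc[OF o(1)] oo by (simp add: cA_def)
  qed
  have hw: "w \<in> lHom L (tno L (Fo A Z) C0) D0" by (rule w)
  have "lcmp L (lcmp L cA (tnm L Ffg (lcmp L cA V))) w = lcmp L cA (lcmp L cXA (lcmp L (tnm L Ffg V) w))"
    unfolding K1
    using lassoc[OF hcA hidcA hFfgV] K4 lassoc[OF hcA hcXA hFfgV, symmetric] lassoc[OF hcA lcmp_hom[OF hcXA hFfgV] hw]
      lassoc[OF hcXA hFfgV hw] oo by simp
  also have "\<dots> = lcmp L (lcmp L cA Ffu) (lcmp L (lcmp L cYB Fgv) w)"
  proof -
    have "lcmp L (lcmp L cYB Fgv) w = lcmp L cYB (lcmp L Fgv w)" using lassoc[OF hcYB hFgv hw] oo by simp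
    moreover have "lcmp L Ffu (lcmp L cYB (lcmp L Fgv w)) = lcmp L cXA (lcmp L (tnm L Ffg V) w)"
      using lassoc[OF hFfu hcYB lcmp_hom[OF hFgv hw], symmetric] K2 lassoc[OF hcXA hFFu lcmp_hom[OF hFgv hw]]
        lassoc[OF hFFu hFgv hw, symmetric] K3 oo by simp
    ultimately show ?thesis using lassoc[OF hcA hFfu lcmp_hom[OF lcmp_hom[OF hcYB hFgv] hw]] oo by simp
  qed
  finally have e: "lcmp L (lcmp L cA (tnm L Ffg (lcmp L cA V))) w = lcmp L (lcmp L cA Ffu) (lcmp L (lcmp L cYB Fgv) w)" .
  show ?thesis unfolding ls_comp_def fst_conv snd_conv
    using e cassoc'[OF f g h] oo lassoc[OF hcA hFfu v] by (simp add: cA_def Ffu_def V_def Ffg_def cYB_def Fgv_def)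
qed


lemma inv_unique:
  assumes "ls_is_inverse C L A (X, A0) (Y, B) hh k" "ls_is_inverse C L A (X, A0) (Y, B) hh k'"
    and o: "X \<in> cOb C" "Y \<in> cOb C" "A0 \<in> lOb L" "B \<in> lOb L"
  shows "k = k'"
proof -
  obtain h1 h2 where hh: "hh = (h1, h2)" by (cases hh)
  obtain k1 k2 where kk: "k = (k1, k2)" by (cases k)
  obtain l1 l2 where ll: "k' = (l1, l2)" by (cases k')
  have H: "(h1, h2) \<in> ls_hom C L A (X, A0) (Y, B)" and K: "(k1, k2) \<in> ls_hom C L A (Y, B) (X, A0)"
    and K': "(l1, l2) \<in> ls_hom C L A (Y, B) (X, A0)"
    and e1: "ls_comp C L A Y B (k1, k2) (h1, h2) = ls_id C L A Y B"
    and e2: "ls_comp C L A X A0 (h1, h2) (l1, l2) = ls_id C L A X A0"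
    using assms by (auto simp: ls_is_inverse_def hh kk ll)
  have "(k1, k2) = ls_comp C L A Y B (k1, k2) (ls_id C L A X A0)" using ls_idr[OF K o(2,1,4,3)] by simp
  also have "\<dots> = ls_comp C L A Y B (k1, k2) (ls_comp C L A X A0 (h1, h2) (l1, l2))" using e2 by simp
  also have "\<dots> = ls_comp C L A Y B (ls_comp C L A Y B (k1, k2) (h1, h2)) (l1, l2)"
    using ls_assoc[OF K H K' o(2,1,2,1,4,3,4,3)] by simp
  also have "\<dots> = (l1, l2)" using e1 ls_idl[OF K' o(2,1,4,3)] by (simp add: ls_id_def)
  finally show ?thesis by (simp add: kk ll)
qed

lemma phi_inv_prop: assumes "Y \<in> cOb C" "Z \<in> cOb C"
  shows "ls_is_inverse C L A (cprd C Y Z, Tl T (cprd C Y Z)) (cprd C Y Z, bpo L (Tl T Y) (Tl T Z)) (phi C L T Y Z) (phi_inv C L A T Y Z)"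
proof -
  obtain k where k: "ls_is_inverse C L A (cprd C Y Z, Tl T (cprd C Y Z)) (cprd C Y Z, bpo L (Tl T Y) (Tl T Z)) (phi C L T Y Z) k"
    using phi_iso[OF assms] by blast
  show ?thesis unfolding phi_inv_def ls_inv_def
  proof (rule theI[of _ k])
    show "ls_is_inverse C L A (cprd C Y Z, Tl T (cprd C Y Z)) (cprd C Y Z, bpo L (Tl T Y) (Tl T Z)) (phi C L T Y Z) k" by (rule k)
    fix x assume "ls_is_inverse C L A (cprd C Y Z, Tl T (cprd C Y Z)) (cprd C Y Z, bpo L (Tl T Y) (Tl T Z)) (phi C L T Y Z) x"
    then show "x = k" using inv_unique[OF _ k] assms by simp
  qed
qed

lemma main:
  assumes X: "X \<in> cOb C" and Y: "Y \<in> cOb C" and Z: "Z \<in> cOb C"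
    and f: "f \<in> cHom C X Y" and g: "g \<in> cHom C X Z"
  shows "Dif C T X (cpair C f g)
       = ls_comp C L A X (Tl T X)
           (fib_pair C L X (Dif C T X f) (Dif C T X g))
           (reindex C L A X (cpair C f g) (bpo L (Tl T Y) (Tl T Z)) (phi_inv C L A T Y Z))"
proof -
  define YZ where "YZ = cprd C Y Z"
  define hp where "hp = cpair C f g"
  define Bo where "Bo = bpo L (Tl T Y) (Tl T Z)"
  define P where "P = lpair L (Tm T f) (Tm T g)"
  have YZ[simp]: "YZ \<in> cOb C" using Y Z by (simp add: YZ_def)
  have oBo[simp]: "Bo \<in> lOb L" using Y Z by (simp add: Bo_def)
  have hhp: "hp \<in> cHom C X YZ" using cpair[OF f g X Y Z] by (simp add: hp_def YZ_def)
  have inv: "ls_is_inverse C L A (YZ, Tl T YZ) (YZ, Bo) (phi C L T Y Z) (phi_inv C L A T Y Z)"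
    using phi_inv_prop[OF Y Z] by (simp add: YZ_def Bo_def)
  obtain k1 k2 where kk: "phi_inv C L A T Y Z = (k1, k2)" by (cases "phi_inv C L A T Y Z")
  define a1 where "a1 = Tm T (cp1 C Y Z)"
  define a2 where "a2 = Tm T (cp2 C Y Z)"
  have phi: "phi C L T Y Z = (cpair C (cp1 C Y Z) (cp2 C Y Z), lpair L a1 a2)"
    by (simp add: phi_def ls_pair_def Tmor_def a1_def a2_def)
  have Hphi: "phi C L T Y Z \<in> ls_hom C L A (YZ, Tl T YZ) (YZ, Bo)"
    and Hk: "(k1, k2) \<in> ls_hom C L A (YZ, Bo) (YZ, Tl T YZ)"
    and Ek: "ls_comp C L A YZ (Tl T YZ) (phi C L T Y Z) (k1, k2) = ls_id C L A YZ (Tl T YZ)"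
    using inv kk by (auto simp: ls_is_inverse_def)
  have Hh: "(hp, Tm T hp) \<in> ls_hom C L A (X, Tl T X) (YZ, Tl T YZ)" using Thom[OF hhp X YZ] by (simp add: Tmor_def)
  have hk2: "k2 \<in> lHom L (tno L (Fo A YZ) Bo) (Tl T YZ)" using Hk by (simp add: ls_hom_def)
  have hTf: "Tm T f \<in> lHom L (tno L (Fo A X) (Tl T X)) (Tl T Y)" using Thom[OF f X Y] by (simp add: Tmor_def ls_hom_def)
  have hTg: "Tm T g \<in> lHom L (tno L (Fo A X) (Tl T X)) (Tl T Z)" using Thom[OF g X Z] by (simp add: Tmor_def ls_hom_def)
  have hP: "P \<in> lHom L (tno L (Fo A X) (Tl T X)) Bo" using lpair[OF hTf hTg] X Y Z by (simp add: P_def Bo_def)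
  have ha1: "a1 \<in> lHom L (tno L (Fo A YZ) (Tl T YZ)) (Tl T Y)" using Thom[OF cp1[OF Y Z, folded YZ_def] YZ Y] by (simp add: Tmor_def ls_hom_def a1_def YZ_def)
  have ha2: "a2 \<in> lHom L (tno L (Fo A YZ) (Tl T YZ)) (Tl T Z)" using Thom[OF cp2[OF Y Z, folded YZ_def] YZ Z] by (simp add: Tmor_def ls_hom_def a2_def YZ_def)
  have pid: "cpair C (cp1 C Y Z) (cp2 C Y Z) = cidn C YZ"
    using cpair_eqI[OF cid[OF cprd[OF Y Z]] cprd[OF Y Z] Y Z] cidl[OF cp1[OF Y Z]] cidl[OF cp2[OF Y Z]] Y Z by (simp add: YZ_def)
  define pre where "pre = lcmp L (tnm L (cX C L A X) (lidn L (Tl T X))) (tnm L (Fm A hp) (Tm T hp))"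
  have hpre: "pre \<in> lHom L (tno L (Fo A X) (Tl T X)) (tno L (Fo A YZ) (Tl T YZ))"
  proof -
    have "Tm T hp \<in> lHom L (tno L (Fo A X) (Tl T X)) (Tl T YZ)" using Hh by (simp add: ls_hom_def)
    then have "tnm L (Fm A hp) (Tm T hp) \<in> lHom L (tno L (Fo A X) (tno L (Fo A X) (Tl T X))) (tno L (Fo A YZ) (Tl T YZ))"
      using tnm[OF Fm[OF hhp]] X by simp
    then show ?thesis using lcmp_hom[OF cXI_hom[OF X Tl[OF X]]] X unfolding pre_def by simp
  qed
  have step1: "ls_comp C L A X (Tl T X) (hp, Tm T hp) (phi C L T Y Z) = (hp, P)"
  proof -
    have t1: "ls_comp C L A X (Tl T X) (hp, Tm T hp) (Tmor T (cp1 C Y Z)) = Tmor T f"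
      using Tcmp[OF hhp cp1[OF Y Z, folded YZ_def] X YZ Y] cpair_p1[OF f g X Y Z] by (simp add: Tmor_def hp_def YZ_def)
    have t2: "ls_comp C L A X (Tl T X) (hp, Tm T hp) (Tmor T (cp2 C Y Z)) = Tmor T g"
      using Tcmp[OF hhp cp2[OF Y Z, folded YZ_def] X YZ Z] cpair_p2[OF f g X Y Z] by (simp add: Tmor_def hp_def YZ_def)
    have "lcmp L pre (lpair L a1 a2) = P"
      unfolding P_def
    proof (rule lpair_uniq)
      show "lcmp L pre (lpair L a1 a2) \<in> lHom L (tno L (Fo A X) (Tl T X)) (bpo L (Tl T Y) (Tl T Z))"
        using lcmp_hom[OF hpre lpair[OF ha1 ha2]] X Y Z by simp
      show "lcmp L (lcmp L pre (lpair L a1 a2)) (lpj1 L (Tl T Y) (Tl T Z)) = Tm T f"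
        using lassoc[OF hpre lpair[OF ha1 ha2] lpj1] lpair_p1[OF ha1 ha2] t1 X Y Z
        by (simp add: ls_comp_def Tmor_def pre_def a1_def)
      show "lcmp L (lcmp L pre (lpair L a1 a2)) (lpj2 L (Tl T Y) (Tl T Z)) = Tm T g"
        using lassoc[OF hpre lpair[OF ha1 ha2] lpj2] lpair_p2[OF ha1 ha2] t2 X Y Z
        by (simp add: ls_comp_def Tmor_def pre_def a2_def)
    qed (use X Y Z in simp_all)
    then show ?thesis using phi pid cidr[OF hhp] X
      by (simp add: ls_comp_def pre_def)
  qed
  have "(hp, Tm T hp) = ls_comp C L A X (Tl T X) (hp, Tm T hp) (ls_id C L A YZ (Tl T YZ))"
    using ls_idr[OF Hh X YZ] X by simp
  also have "\<dots> = ls_comp C L A X (Tl T X) (ls_comp C L A X (Tl T X) (hp, Tm T hp) (phi C L T Y Z)) (k1, k2)"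
    using Ek ls_assoc[OF Hh _ Hk, of "fst (phi C L T Y Z)" "snd (phi C L T Y Z)"] Hphi X by simp
  also have "\<dots> = ls_comp C L A X (Tl T X) (hp, P) (k1, k2)" using step1 by simp
  finally have Th: "Tm T hp = lcmp L (lcmp L (tnm L (cX C L A X) (lidn L (Tl T X))) (tnm L (Fm A hp) P)) k2"
    by (simp add: ls_comp_def)
  have ex: "lcmp L (tnm L (lidn L (Fo A X)) P) (tnm L (Fm A hp) (lidn L Bo)) = tnm L (Fm A hp) P"
    using interchange[OF lid[OF Fo[OF X]] Fm[OF hhp] hP lid[OF oBo]] lidl[OF Fm[OF hhp]] lidr[OF hP] X by simp
  have hidP: "tnm L (lidn L (Fo A X)) P \<in> lHom L (tno L (Fo A X) (tno L (Fo A X) (Tl T X))) (tno L (Fo A X) Bo)"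
    using tnm[OF lid[OF Fo[OF X]] hP] X by simp
  have hFhB: "tnm L (Fm A hp) (lidn L Bo) \<in> lHom L (tno L (Fo A X) Bo) (tno L (Fo A YZ) Bo)"
    using tnm[OF Fm[OF hhp] lid[OF oBo]] X by simp
  have "lcmp L (lcmp L (tnm L (cX C L A X) (lidn L (Tl T X))) (tnm L (lidn L (Fo A X)) P)) (lcmp L (tnm L (Fm A hp) (lidn L Bo)) k2)
       = Tm T hp"
    unfolding Th using lassoc[OF cXI_hom[OF X Tl[OF X]] hidP lcmp_hom[OF hFhB hk2]] lassoc[OF hidP hFhB hk2, symmetric]
      ex lassoc[OF cXI_hom[OF X Tl[OF X]] lcmp_hom[OF hidP hFhB] hk2, symmetric] X by simp
  then show ?thesis
    by (simp add: Dif_def fib_pair_def reindex_def ls_comp_def kk Fid X cidl[OF cid[OF X]] hp_def Bo_def P_def)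
qed

end

theorem proposition4p14:
  assumes "gdsc C L A T"
    and "X \<in> cOb C" and "Y \<in> cOb C" and "Z \<in> cOb C"
    and "f \<in> cHom C X Y" and "g \<in> cHom C X Z"
  shows "Dif C T X (cpair C f g)
       = ls_comp C L A X (Tl T X)
           (fib_pair C L X (Dif C T X f) (Dif C T X g))
           (reindex C L A X (cpair C f g) (bpo L (Tl T Y) (Tl T Z)) (phi_inv C L A T Y Z))"
  using G.main[OF G.intro[OF assms(1)] assms(2-6)] .

end
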